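(* Let $G=(S,B,E)$ be an instance of the Online Bipartite Matching Problem which admits a matching of size $n$. Then for any $\alpha>0$ and any arrival order of the buyers, \[ \mathbb{P}\left[|M| < \left(1-\frac{1}{e}-\alpha\right)n\right] < e^{-2\alpha^2 n}, \] where $M$ is the random variable denoting the matching generated by \textsc{Ranking}.
   Context: Online Bipartite Matching Problem: $G=(S,B,E)$ is an undirected bipartite graph with a set $S$ of sellers (known in advance) and a set $B$ of buyers. The buyers arrive one at a time in an adversarially chosen order; when a buyer $i$ arrives, its neighborhood $N(i)\subseteq S$ is revealed, and the algorithm must irrevocably decide to match $i$ to a currently unmatched neighbor or leave it unmatched. \textsc{Ranking}: for every $j\in S$, independently sample a uniformly random rank $x_j\in[0,1]$ (before any buyer arrives); when buyer $i$ arrives, match $i$ to the unmatched $j\in N(i)$ with minimum $x_j$ (if any unmatched neighbor exists; ties occur with probability zero). $|M|$ is the number of edges of the resulting matching. *)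

theory Defs
  imports "HOL-Probability.Probability"
begin

text \<open>Edges are pairs (buyer, seller). A matching is a set of edges in which
  every buyer and every seller occurs at most once.\<close>
definition is_matching :: "('b \<times> 's) set \<Rightarrow> bool" where
  "is_matching M \<longleftrightarrow> (\<forall>(b,s)\<in>M. \<forall>(b',s')\<in>M. (b = b' \<longleftrightarrow> s = s'))"

text \<open>One step of Ranking: state = (set of matched sellers, matching so far).
  The arriving buyer b is matched to the unmatched neighbour of minimal rank
  (ties, which have probability zero, are broken arbitrarily).\<close>
definition ranking_step ::
  "('b \<times> 's) set \<Rightarrow> ('s \<Rightarrow> real) \<Rightarrow> 'b \<Rightarrow> 's set \<times> ('b \<times> 's) set \<Rightarrow> 's set \<times> ('b \<times> 's) set" where
  "ranking_step E x b st =
     (let C = {s. (b, s) \<in> E \<and> s \<notin> fst st} in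
      if C = {} then st
      else let s = (ARG_MIN x s. s \<in> C) in (insert s (fst st), insert (b, s) (snd st)))"

definition ranking :: "('b \<times> 's) set \<Rightarrow> ('s \<Rightarrow> real) \<Rightarrow> 'b list \<Rightarrow> ('b \<times> 's) set" where
  "ranking E x bs = snd (fold (ranking_step E x) bs ({}, {}))"

definition rank_space :: "'s set \<Rightarrow> ('s \<Rightarrow> real) measure" where
  "rank_space S = PiM S (\<lambda>_. uniform_measure lborel {0..1::real})"

end

theory Submission
  imports Defs
begin

definition nbr :: "('b \<times> 's) set \<Rightarrow> 'b \<Rightarrow> 's set \<Rightarrow> 's set" where
  "nbr E b A = {s. (b, s) \<in> E \<and> s \<notin> A}"

lemma ranking_step_eq:
  "ranking_step E x b (A, M) =
    (if nbr E b A = {} then (A, M)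
     else (insert (arg_min_on x (nbr E b A)) A, insert (b, arg_min_on x (nbr E b A)) M))"
  by (simp only: ranking_step_def Let_def fst_conv snd_conv nbr_def arg_min_on_def)

lemma nbr_sub: "nbr E b A \<subseteq> snd ` E"
  unfolding nbr_def by (auto intro: rev_image_eqI)

lemma finite_nbr: "finite E \<Longrightarrow> finite (nbr E b A)"
  by (rule finite_subset[OF nbr_sub]) auto

lemma ch_in: "finite E \<Longrightarrow> nbr E b A \<noteq> {} \<Longrightarrow> arg_min_on (x::'s \<Rightarrow> real) (nbr E b A) \<in> nbr E b A"
  by (rule arg_min_if_finite(1)[OF finite_nbr])

lemma ch_le: "finite E \<Longrightarrow> t \<in> nbr E b A \<Longrightarrow> (x::'s \<Rightarrow> real) (arg_min_on x (nbr E b A)) \<le> x t"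
  by (rule arg_min_least[OF finite_nbr]) auto

lemma ch_unique:
  assumes "inj_on (x::'s\<Rightarrow>real) C" "s \<in> C" "\<forall>t\<in>C. x s \<le> x t"
  shows "arg_min_on x C = s"
  unfolding arg_min_on_def
  by (rule arg_min_inj_eq) (use assms in auto)

lemma fold2_inv:
  assumes "P st st'"
    and "\<And>b st st'. b \<in> set bs \<Longrightarrow> P st st' \<Longrightarrow> P (f b st) (g b st')"
  shows "P (fold f bs st) (fold g bs st')"
  using assms by (induction bs arbitrary: st st') auto

lemma fold_inv:
  assumes "P st"
    and "\<And>b st. b \<in> set bs \<Longrightarrow> P st \<Longrightarrow> P (f b st)"
  shows "P (fold f bs st)"
  using assms by (induction bs arbitrary: st) auto

lemma step_mono: "fst st \<subseteq> fst (ranking_step E x b st) \<and> snd st \<subseteq> snd (ranking_step E x b st)"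
  by (cases st) (auto simp: ranking_step_eq)

lemma fold_mono: "fst st \<subseteq> fst (fold (ranking_step E x) bs st) \<and> snd st \<subseteq> snd (fold (ranking_step E x) bs st)"
proof (induction bs arbitrary: st)
  case (Cons b bs)
  have 1: "fst st \<subseteq> fst (ranking_step E x b st)" "snd st \<subseteq> snd (ranking_step E x b st)"
    using step_mono[of st E x b] by auto
  have 2: "fst (ranking_step E x b st) \<subseteq> fst (fold (ranking_step E x) bs (ranking_step E x b st))"
     "snd (ranking_step E x b st) \<subseteq> snd (fold (ranking_step E x) bs (ranking_step E x b st))"
    using Cons.IH[of "ranking_step E x b st"] by auto
  have 3: "fold (ranking_step E x) (b # bs) st = fold (ranking_step E x) bs (ranking_step E x b st)"
    by simp
  show ?case unfolding 3 using 1 2 by (meson order_trans)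
qed simp

definition good_st :: "('b \<times> 's) set \<Rightarrow> 's set \<times> ('b \<times> 's) set \<Rightarrow> bool" where
  "good_st E st \<longleftrightarrow> fst st = snd ` snd st \<and> inj_on snd (snd st) \<and> finite (snd st) \<and> snd st \<subseteq> E"

lemma good_step: "finite E \<Longrightarrow> good_st E st \<Longrightarrow> good_st E (ranking_step E x b st)"
proof (cases st)
  case (Pair A M)
  assume fE: "finite E" and g: "good_st E st"
  show ?thesis
  proof (cases "nbr E b A = {}")
    case True then show ?thesis using g Pair by (simp add: ranking_step_eq)
  next
    case False
    define w where "w = arg_min_on x (nbr E b A)"
    have w: "w \<in> nbr E b A" using ch_in[OF fE False] w_def by simp
    then have "w \<notin> snd ` M" "(b,w) \<in> E" using g Pair by (auto simp: nbr_def good_st_def)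
    moreover have "ranking_step E x b st = (insert w A, insert (b,w) M)"
      using Pair False by (simp add: ranking_step_eq w_def)
    ultimately show ?thesis using g Pair by (auto simp: good_st_def)
  qed
qed

lemma good_run: "finite E \<Longrightarrow> good_st E (fold (ranking_step E x) bs ({}, {}))"
  apply (rule fold_inv[where P="good_st E"])
   apply (simp add: good_st_def)
  by (rule good_step)

lemma card_run: "finite E \<Longrightarrow> card (ranking E x bs) = card (fst (fold (ranking_step E x) bs ({}, {})))"
proof -
  assume fE: "finite E"
  have g: "good_st E (fold (ranking_step E x) bs ({}, {}))" using good_run[OF fE] .
  show ?thesis unfolding ranking_def
    using card_image[of snd "snd (fold (ranking_step E x) bs ({}, {}))"] g
    unfolding good_st_def by simp
qed

lemma order_equiv_step:
  assumes "\<forall>s\<in>snd ` E. \<forall>t\<in>snd ` E. (x s < x t \<longleftrightarrow> x' s < x' t)"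
  shows "ranking_step E x b st = ranking_step E x' b st"
proof (cases st)
  case (Pair A M)
  have C: "nbr E b A \<subseteq> snd ` E" by (rule nbr_sub)
  have "arg_min_on x (nbr E b A) = arg_min_on x' (nbr E b A)"
  proof -
    have "is_arg_min x (\<lambda>y. y \<in> nbr E b A) = is_arg_min x' (\<lambda>y. y \<in> nbr E b A)"
    proof (rule ext)
      fix y
      show "is_arg_min x (\<lambda>y. y \<in> nbr E b A) y = is_arg_min x' (\<lambda>y. y \<in> nbr E b A) y"
        unfolding is_arg_min_def using C assms by blast
    qed
    then show ?thesis unfolding arg_min_on_def arg_min_def by simp
  qed
  then show ?thesis using Pair by (simp add: ranking_step_eq)
qed

lemma order_equiv_ranking:
  assumes "\<forall>s\<in>snd ` E. \<forall>t\<in>snd ` E. (x s < x t \<longleftrightarrow> x' s < x' t)"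
  shows "ranking E x bs = ranking E x' bs"
proof -
  have "ranking_step E x = ranking_step E x'"
    using order_equiv_step[OF assms] by (intro ext) blast
  then show ?thesis unfolding ranking_def by simp
qed

definition run :: "('b \<times> 's) set \<Rightarrow> ('s \<Rightarrow> real) \<Rightarrow> 'b list \<Rightarrow> 's set \<times> ('b \<times> 's) set" where
  "run E x bs = fold (ranking_step E x) bs ({}, {})"

lemma ranking_run: "ranking E x bs = snd (run E x bs)"
  by (simp add: ranking_def run_def)

lemma card_ranking_run: "finite E \<Longrightarrow> card (ranking E x bs) = card (fst (run E x bs))"
  using card_run by (simp add: run_def)

definition del_s :: "('b \<times> 's) set \<Rightarrow> 's set \<Rightarrow> ('b \<times> 's) set" where
  "del_s E D = {e \<in> E. snd e \<notin> D}"

definition del_b :: "('b \<times> 's) set \<Rightarrow> 'b set \<Rightarrow> ('b \<times> 's) set" where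
  "del_b E B' = {e \<in> E. fst e \<in> B'}"

definition inv_sd :: "'s set \<Rightarrow> ('s \<Rightarrow> real) \<Rightarrow> 's set \<times> ('b \<times> 's) set \<Rightarrow> 's set \<times> ('b \<times> 's) set \<Rightarrow> bool" where
  "inv_sd D x st st' \<longleftrightarrow> fst st - D \<subseteq> fst st' \<and> card (fst st') \<le> card (fst st) \<and> finite (fst st) \<and> finite (fst st')
     \<and> (\<forall>b s'. (b, s') \<in> snd st' \<longrightarrow> (\<exists>s. (b, s) \<in> snd st \<and> x s \<le> x s'))"

lemma sd_step:
  assumes fE: "finite E" and inj: "inj_on x (snd ` E)"
    and I: "inv_sd D x (A, M) (A', M')"
  shows "inv_sd D x (ranking_step E x b (A, M)) (ranking_step (del_s E D) x b (A', M'))"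
proof -
  define C where "C = nbr E b A"
  define C' where "C' = nbr (del_s E D) b A'"
  have I1: "A - D \<subseteq> A'" and I2: "card A' \<le> card A" and I3: "finite A" and I4: "finite A'"
    and I5: "\<forall>b s'. (b, s') \<in> M' \<longrightarrow> (\<exists>s. (b, s) \<in> M \<and> x s \<le> x s')"
    using I unfolding inv_sd_def by auto
  have sub: "C' \<subseteq> C" using I1 unfolding C_def C'_def nbr_def del_s_def by auto
  have fE': "finite (del_s E D)" using fE unfolding del_s_def by simp
  show ?thesis
  proof (cases "C = {}")
    case True
    then have "C' = {}" using sub by auto
    then show ?thesis using True I unfolding C_def C'_def by (simp add: ranking_step_eq)
  next
    case False
    define w where "w = arg_min_on x C"
    have wC: "w \<in> C" using ch_in[OF fE False[unfolded C_def]] unfolding w_def C_def .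
    have wmin: "\<forall>t\<in>C. x w \<le> x t" using ch_le[OF fE] unfolding w_def C_def by blast
    have wA: "w \<notin> A" and wE: "(b, w) \<in> E" using wC unfolding C_def nbr_def by auto
    have st: "ranking_step E x b (A, M) = (insert w A, insert (b, w) M)"
      using False unfolding C_def w_def by (simp add: ranking_step_eq)
    have cardw: "card (insert w A) = card A + 1" using wA I3 by simp
    show ?thesis
    proof (cases "C' = {}")
      case True
      have st': "ranking_step (del_s E D) x b (A', M') = (A', M')"
        using True unfolding C'_def by (simp add: ranking_step_eq)
      have "w \<in> D \<or> w \<in> A'" using wC True wE unfolding C'_def nbr_def del_s_def by auto
      then have "insert w A - D \<subseteq> A'" using I1 by auto
      moreover have "\<forall>bb s'. (bb, s') \<in> M' \<longrightarrow> (\<exists>s. (bb, s) \<in> insert (b, w) M \<and> x s \<le> x s')"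
          using I5 by blast
      ultimately show ?thesis unfolding st st' inv_sd_def using I2 I3 I4 cardw by auto
    next
      case False2: False
      define w' where "w' = arg_min_on x C'"
      have w'C: "w' \<in> C'" using ch_in[OF fE' False2[unfolded C'_def]] unfolding w'_def C'_def .
      have w'A: "w' \<notin> A'" using w'C unfolding C'_def nbr_def by auto
      have st': "ranking_step (del_s E D) x b (A', M') = (insert w' A', insert (b, w') M')"
        using False2 unfolding C'_def w'_def by (simp add: ranking_step_eq)
      show ?thesis
      proof (cases "w \<in> C'")
        case True
        have injC': "inj_on x C'"
          using inj sub unfolding C_def by (meson inj_on_subset nbr_sub order_trans)
        have "w' = w" unfolding w'_def
          by (rule ch_unique[OF injC' True]) (use wmin sub in blast)
        moreover have "w \<notin> A'" using True unfolding C'_def nbr_def by auto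
        moreover have "\<forall>bb s'. (bb, s') \<in> insert (b, w) M' \<longrightarrow> (\<exists>s. (bb, s) \<in> insert (b, w) M \<and> x s \<le> x s')"
          using I5 by blast
        ultimately show ?thesis unfolding st st' inv_sd_def using I1 I2 I3 I4 cardw
          by (auto simp: card_insert_if)
      next
        case False3: False
        have "w \<in> D \<or> w \<in> A'" using wC False3 wE unfolding C'_def nbr_def del_s_def by auto
        then have s1: "insert w A - D \<subseteq> insert w' A'" using I1 by auto
        have s2: "card (insert w' A') \<le> card (insert w A)"
          using I2 I4 cardw by (simp add: card_insert_if)
        have s3: "x w \<le> x w'" using wmin w'C sub by blast
        have s4: "\<forall>bb s'. (bb, s') \<in> insert (b, w') M' \<longrightarrow> (\<exists>s. (bb, s) \<in> insert (b, w) M \<and> x s \<le> x s')"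
          using I5 s3 by blast
        show ?thesis unfolding st st' inv_sd_def using s1 s2 s4 I3 I4 by auto
      qed
    qed
  qed
qed

lemma sd_step':
  assumes fE: "finite E" and inj: "inj_on x (snd ` E)"
    and I: "inv_sd D x st st'"
  shows "inv_sd D x (ranking_step E x b st) (ranking_step (del_s E D) x b st')"
  using sd_step[OF fE inj, of D "fst st" "snd st" "fst st'" "snd st'" b] I by simp

lemma sd_run:
  assumes fE: "finite E" and inj: "inj_on x (snd ` E)"
  shows "inv_sd D x (run E x bs) (run (del_s E D) x bs)"
  unfolding run_def
  apply (rule fold2_inv[where P = "inv_sd D x"])
   apply (simp add: inv_sd_def)
  by (rule sd_step'[OF fE inj])

lemma sd_card:
  assumes fE: "finite E" and inj: "inj_on x (snd ` E)" and fD: "finite D"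
  shows "card (fst (run (del_s E D) x bs)) \<le> card (fst (run E x bs))"
    "card (fst (run E x bs)) \<le> card (fst (run (del_s E D) x bs)) + card D"
proof -
  have I: "inv_sd D x (run E x bs) (run (del_s E D) x bs)" by (rule sd_run[OF fE inj])
  then show "card (fst (run (del_s E D) x bs)) \<le> card (fst (run E x bs))"
    unfolding inv_sd_def by auto
  have "fst (run E x bs) \<subseteq> fst (run (del_s E D) x bs) \<union> D" using I unfolding inv_sd_def by auto
  then have "card (fst (run E x bs)) \<le> card (fst (run (del_s E D) x bs) \<union> D)"
    using I fD unfolding inv_sd_def by (intro card_mono) auto
  also have "\<dots> \<le> card (fst (run (del_s E D) x bs)) + card D" by (rule card_Un_le)
  finally show "card (fst (run E x bs)) \<le> card (fst (run (del_s E D) x bs)) + card D" .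
qed

lemma sd_partner:
  assumes fE: "finite E" and inj: "inj_on x (snd ` E)"
    and "(b, s') \<in> snd (run (del_s E D) x bs)"
  shows "\<exists>s. (b, s) \<in> snd (run E x bs) \<and> x s \<le> x s'"
  using sd_run[OF fE inj, of D bs] assms(3) unfolding inv_sd_def by blast

definition inv_bd :: "'s set \<times> ('b \<times> 's) set \<Rightarrow> 's set \<times> ('b \<times> 's) set \<Rightarrow> bool" where
  "inv_bd st st' \<longleftrightarrow> fst st' \<subseteq> fst st \<and> finite (fst st)"

lemma bd_step:
  assumes fE: "finite E" and inj: "inj_on x (snd ` E)"
    and I: "inv_bd (A, M) (A', M')"
  shows "inv_bd (ranking_step E x b (A, M)) (ranking_step (del_b E B') x b (A', M'))"
proof -
  define C where "C = nbr E b A"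
  define C' where "C' = nbr (del_b E B') b A'"
  have I1: "A' \<subseteq> A" and I3: "finite A" using I unfolding inv_bd_def by auto
  have fE': "finite (del_b E B')" using fE unfolding del_b_def by simp
  have mono: "A \<subseteq> fst (ranking_step E x b (A, M))" using step_mono[of "(A,M)" E x b] by simp
  have fin: "finite (fst (ranking_step E x b (A, M)))" using I3 by (simp add: ranking_step_eq)
  show ?thesis
  proof (cases "C' = {}")
    case True
    have st': "ranking_step (del_b E B') x b (A', M') = (A', M')"
      using True unfolding C'_def by (simp add: ranking_step_eq)
    show ?thesis unfolding st' inv_bd_def using I1 mono fin by auto
  next
    case False
    then have bB: "b \<in> B'" unfolding C'_def nbr_def del_b_def by auto
    then have sub: "C \<subseteq> C'" using I1 unfolding C_def C'_def nbr_def del_b_def by auto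
    define w' where "w' = arg_min_on x C'"
    have w'C: "w' \<in> C'" using ch_in[OF fE' False[unfolded C'_def]] unfolding w'_def C'_def .
    have w'min: "\<forall>t\<in>C'. x w' \<le> x t" using ch_le[OF fE'] unfolding w'_def C'_def by blast
    have st': "ranking_step (del_b E B') x b (A', M') = (insert w' A', insert (b, w') M')"
      using False unfolding C'_def w'_def by (simp add: ranking_step_eq)
    show ?thesis
    proof (cases "w' \<in> C")
      case True
      then have CnE: "C \<noteq> {}" by auto
      have injC: "inj_on x C"
        using inj unfolding C_def by (meson inj_on_subset nbr_sub)
      have "arg_min_on x C = w'"
        by (rule ch_unique[OF injC True]) (use w'min sub in blast)
      then have st: "ranking_step E x b (A, M) = (insert w' A, insert (b, w') M)"
        using CnE unfolding C_def by (simp add: ranking_step_eq)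
      show ?thesis unfolding st st' inv_bd_def using I1 I3 by auto
    next
      case False2: False
      have "w' \<in> A" using w'C False2 bB unfolding C_def C'_def nbr_def del_b_def by auto
      then show ?thesis unfolding st' inv_bd_def using I1 mono fin by auto
    qed
  qed
qed

lemma bd_step':
  assumes fE: "finite E" and inj: "inj_on x (snd ` E)"
    and I: "inv_bd st st'"
  shows "inv_bd (ranking_step E x b st) (ranking_step (del_b E B') x b st')"
  using bd_step[OF fE inj, of "fst st" "snd st" "fst st'" "snd st'" b B'] I by simp

lemma bd_card:
  assumes fE: "finite E" and inj: "inj_on x (snd ` E)"
  shows "card (fst (run (del_b E B') x bs)) \<le> card (fst (run E x bs))"
proof -
  have "inv_bd (run E x bs) (run (del_b E B') x bs)"
    unfolding run_def
    apply (rule fold2_inv[where P = "inv_bd"])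
     apply (simp add: inv_bd_def)
    by (rule bd_step'[OF fE inj])
  then show ?thesis unfolding inv_bd_def by (auto intro: card_mono)
qed

definition inv_j :: "'s \<Rightarrow> 's set \<times> ('b \<times> 's) set \<Rightarrow> 's set \<times> ('b \<times> 's) set \<Rightarrow> bool" where
  "inv_j j st st' \<longleftrightarrow> (j \<notin> fst st \<longrightarrow> st = st')"

lemma j_step:
  assumes fE: "finite E" and inj: "inj_on x (snd ` E)"
    and I: "inv_j j st st'"
  shows "inv_j j (ranking_step E x b st) (ranking_step (del_s E {j}) x b st')"
  unfolding inv_j_def
proof
  assume jn: "j \<notin> fst (ranking_step E x b st)"
  then have "j \<notin> fst st" using step_mono[of st E x b] by auto
  then have eq: "st = st'" using I unfolding inv_j_def by simp
  obtain A M where stAM: "st = (A, M)" by (cases st)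
  define C where "C = nbr E b A"
  have C': "nbr (del_s E {j}) b A = C - {j}" unfolding C_def nbr_def del_s_def by auto
  have fE': "finite (del_s E {j})" using fE unfolding del_s_def by simp
  show "ranking_step E x b st = ranking_step (del_s E {j}) x b st'"
  proof (cases "C = {}")
    case True
    then show ?thesis unfolding eq[symmetric] stAM using C' unfolding C_def by (simp add: ranking_step_eq)
  next
    case False
    define w where "w = arg_min_on x C"
    have wC: "w \<in> C" using ch_in[OF fE False[unfolded C_def]] unfolding w_def C_def .
    have wmin: "\<forall>t\<in>C. x w \<le> x t" using ch_le[OF fE] unfolding w_def C_def by blast
    have st: "ranking_step E x b (A, M) = (insert w A, insert (b, w) M)"
      using False unfolding C_def w_def by (simp add: ranking_step_eq)
    have wj: "w \<noteq> j" using jn unfolding stAM st by auto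
    have injC: "inj_on x (C - {j})"
      using inj unfolding C_def by (meson inj_on_subset nbr_sub Diff_subset order_trans)
    have "arg_min_on x (C - {j}) = w"
      by (rule ch_unique[OF injC]) (use wC wj wmin in auto)
    moreover have "C - {j} \<noteq> {}" using wC wj by auto
    ultimately have "ranking_step (del_s E {j}) x b (A, M) = (insert w A, insert (b, w) M)"
      using C' by (simp add: ranking_step_eq)
    then show ?thesis using st eq stAM by simp
  qed
qed

lemma j_run:
  assumes fE: "finite E" and inj: "inj_on x (snd ` E)"
    and "j \<notin> fst (run E x bs)"
  shows "run (del_s E {j}) x bs = run E x bs"
proof -
  have "inv_j j (run E x bs) (run (del_s E {j}) x bs)"
    unfolding run_def
    apply (rule fold2_inv[where P = "inv_j j"])
     apply (simp add: inv_j_def)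
    by (rule j_step[OF fE inj])
  then show ?thesis using assms(3) unfolding inv_j_def by simp
qed

lemma unmatched_partner:
  assumes fE: "finite E" and inj: "inj_on x (snd ` E)"
    and ij: "(i, j) \<in> E" and ib: "i \<in> set bs" and jn: "j \<notin> fst (run E x bs)"
  shows "\<exists>s. (i, s) \<in> snd (run E x bs) \<and> x s < x j"
proof -
  obtain xs ys where bs: "bs = xs @ i # ys" using split_list[OF ib] by blast
  define st1 where "st1 = fold (ranking_step E x) xs ({}, {})"
  define st2 where "st2 = ranking_step E x i st1"
  have R: "run E x bs = fold (ranking_step E x) ys st2"
    unfolding run_def bs st2_def st1_def by simp
  have m2: "fst st2 \<subseteq> fst (run E x bs)" "snd st2 \<subseteq> snd (run E x bs)"
    unfolding R using fold_mono[of st2 E x ys] by auto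
  have m1: "fst st1 \<subseteq> fst st2" using step_mono[of st1 E x i] unfolding st2_def by auto
  obtain A M where stAM: "st1 = (A, M)" by (cases st1)
  define C where "C = nbr E i A"
  have jC: "j \<in> C" using jn m1 m2 ij unfolding C_def nbr_def stAM by auto
  then have CnE: "C \<noteq> {}" by auto
  define w where "w = arg_min_on x C"
  have wC: "w \<in> C" using ch_in[OF fE CnE[unfolded C_def]] unfolding w_def C_def .
  have wle: "x w \<le> x j" using ch_le[OF fE jC[unfolded C_def]] unfolding w_def C_def .
  have st: "st2 = (insert w A, insert (i, w) M)"
    using CnE unfolding st2_def stAM C_def w_def by (simp add: ranking_step_eq)
  have "w \<in> fst (run E x bs)" using m2 st by auto
  then have wj: "w \<noteq> j" using jn by auto
  have "x w \<noteq> x j"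
  proof
    assume "x w = x j"
    moreover have "w \<in> snd ` E" "j \<in> snd ` E" using wC jC nbr_sub[of E i A] unfolding C_def by blast+
    ultimately show False using inj wj by (meson inj_onD)
  qed
  then have "x w < x j" using wle by simp
  moreover have "(i, w) \<in> snd (run E x bs)" using m2 st by auto
  ultimately show ?thesis by blast
qed

abbreviation U :: "real measure" where "U \<equiv> uniform_measure lborel {0..1::real}"

lemma sets_U[simp]: "sets U = sets borel" by simp

lemma prob_U: "prob_space U"
  by (rule prob_space_uniform_measure) auto

lemma comp_meas: "(\<lambda>x. x s) \<in> borel_measurable (PiM S (\<lambda>_. U))"
proof (cases "s \<in> S")
  case True
  have "(\<lambda>x. x s) \<in> measurable (PiM S (\<lambda>_. U)) U"
    by (rule measurable_component_singleton[OF True])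
  then show ?thesis by (simp add: measurable_cong_sets[OF refl sets_U])
next
  case False
  show ?thesis
  proof (rule measurableI)
    fix A :: "real set"
    have "(\<lambda>x. x s) -` A \<inter> space (PiM S (\<lambda>_. U)) = (if undefined \<in> A then space (PiM S (\<lambda>_. U)) else {})"
      using False by (auto simp: space_PiM PiE_def extensional_def)
    then show "(\<lambda>x. x s) -` A \<inter> space (PiM S (\<lambda>_. U)) \<in> sets (PiM S (\<lambda>_. U))" by simp
  qed simp
qed

definition same_pat :: "'s set \<Rightarrow> ('s \<Rightarrow> real) \<Rightarrow> ('s \<Rightarrow> real) \<Rightarrow> bool" where
  "same_pat S x y \<longleftrightarrow> (\<forall>s\<in>S. \<forall>t\<in>S. (x s < x t \<longleftrightarrow> y s < y t))"

lemma pattern_meas: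
  fixes F :: "('s \<Rightarrow> real) \<Rightarrow> 'b" and S :: "'s set"
  assumes fin: "finite S"
    and resp: "\<And>x y. x \<in> space (PiM S (\<lambda>_. U)) \<Longrightarrow> y \<in> space (PiM S (\<lambda>_. U)) \<Longrightarrow> same_pat S x y \<Longrightarrow> F x = F y"
    and sp: "\<And>x. x \<in> space (PiM S (\<lambda>_. U)) \<Longrightarrow> F x \<in> space N"
  shows "F \<in> measurable (PiM S (\<lambda>_. U)) N"
proof (rule measurableI)
  let ?M = "PiM S (\<lambda>_. U)"
  show "F x \<in> space N" if "x \<in> space ?M" for x using sp that .
  fix A assume A: "A \<in> sets N"
  define pat where "pat x = {p \<in> S \<times> S. x (fst p) < x (snd p)}" for x :: "'s \<Rightarrow> real"
  define cls where "cls P = {x \<in> space ?M. \<forall>p\<in>S \<times> S. (x (fst p) < x (snd p)) = (p \<in> P)}" for P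
  define Q where "Q = {P \<in> Pow (S \<times> S). \<exists>x\<in>space ?M. pat x = P \<and> F x \<in> A}"
  have cls_pat: "x \<in> cls P \<longleftrightarrow> x \<in> space ?M \<and> pat x = P" if "P \<subseteq> S \<times> S" for x P
    using that unfolding cls_def pat_def by auto
  have pat_same: "same_pat S x y" if "pat x = pat y" for x y
    using that unfolding pat_def same_pat_def by (auto simp: set_eq_iff)
  have eq: "F -` A \<inter> space ?M = (\<Union>P\<in>Q. cls P)"
  proof (rule set_eqI)
    fix x
    show "x \<in> F -` A \<inter> space ?M \<longleftrightarrow> x \<in> (\<Union>P\<in>Q. cls P)"
    proof
      assume "x \<in> F -` A \<inter> space ?M"
      then have x: "x \<in> space ?M" "F x \<in> A" by auto
      then have "pat x \<in> Q" unfolding Q_def pat_def by auto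
      moreover have "x \<in> cls (pat x)" using x cls_pat[of "pat x" x] unfolding pat_def by auto
      ultimately show "x \<in> (\<Union>P\<in>Q. cls P)" by blast
    next
      assume "x \<in> (\<Union>P\<in>Q. cls P)"
      then obtain P where P: "P \<in> Q" and x: "x \<in> cls P" by blast
      then obtain y where y: "y \<in> space ?M" "pat y = P" "F y \<in> A" unfolding Q_def by auto
      have xP: "x \<in> space ?M" "pat x = P" using cls_pat[of P x] P x unfolding Q_def by auto
      have "F x = F y" using resp[OF xP(1) y(1)] pat_same[of x y] xP y by simp
      then show "x \<in> F -` A \<inter> space ?M" using y xP by simp
    qed
  qed
  have "cls P \<in> sets ?M" for P
  proof -
    note comp_meas[measurable]
    have lt: "Measurable.pred ?M (\<lambda>x. x a < x b)" for a b by measurable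
    have lt2: "Measurable.pred ?M (\<lambda>x. (x a < x b) = c)" for a b and c :: bool
      using lt[of a b] by (cases c) (auto intro: pred_intros_logic)
    have "Measurable.pred ?M (\<lambda>x. \<forall>p\<in>S \<times> S. (x (fst p) < x (snd p)) = (p \<in> P))"
      by (rule pred_intros_finite(3)) (use fin lt2 in auto)
    then show ?thesis unfolding cls_def by (simp add: pred_def)
  qed
  moreover have "finite Q" unfolding Q_def using fin by (auto intro: finite_subset[of _ "Pow (S \<times> S)"])
  ultimately show "F -` A \<inter> space ?M \<in> sets ?M" unfolding eq by (intro sets.finite_UN) auto
qed

lemma same_pat_ranking:
  assumes "snd ` E \<subseteq> S" "same_pat S x y"
  shows "ranking E x bs = ranking E y bs"
  by (rule order_equiv_ranking) (use assms in \<open>auto simp: same_pat_def\<close>)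

lemma null_tie:
  assumes fin: "finite S" and s: "s \<in> S" and st: "s \<noteq> t"
  shows "emeasure (PiM S (\<lambda>_. U)) {x \<in> space (PiM S (\<lambda>_. U)). x s = x t} = 0"
proof -
  interpret PS: product_prob_space "\<lambda>_. U" S
    by (simp add: product_prob_space_def product_prob_space_axioms_def product_sigma_finite_def
        prob_U prob_space_imp_sigma_finite)
  let ?I = "S - {s}"
  have Sins: "S = insert s ?I" using s by auto
  note comp_meas[measurable]
  have meas: "(\<lambda>x. indicator {x \<in> space (PiM S (\<lambda>_. U)). x s = x t} x :: ennreal) \<in> borel_measurable (PiM (insert s ?I) (\<lambda>_. U))"
    unfolding Sins[symmetric] by measurable
  have "emeasure (PiM S (\<lambda>_. U)) {x \<in> space (PiM S (\<lambda>_. U)). x s = x t}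
      = (\<integral>\<^sup>+x. indicator {x \<in> space (PiM S (\<lambda>_. U)). x s = x t} x \<partial>PiM (insert s ?I) (\<lambda>_. U))"
    unfolding Sins[symmetric] by (subst nn_integral_indicator) measurable
  also have "\<dots> = (\<integral>\<^sup>+x. (\<integral>\<^sup>+y. indicator {x \<in> space (PiM S (\<lambda>_. U)). x s = x t} (x(s := y)) \<partial>U) \<partial>PiM ?I (\<lambda>_. U))"
    by (rule PS.product_nn_integral_insert) (use fin meas in auto)
  also have "\<dots> = (\<integral>\<^sup>+x. 0 \<partial>PiM ?I (\<lambda>_. U))"
  proof (rule nn_integral_cong)
    fix x assume x: "x \<in> space (PiM ?I (\<lambda>_. U))"
    have "(\<integral>\<^sup>+y. indicator {x \<in> space (PiM S (\<lambda>_. U)). x s = x t} (x(s := y)) \<partial>U)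
        \<le> (\<integral>\<^sup>+y. indicator {x t} y \<partial>U)"
      by (rule nn_integral_mono) (use st in \<open>auto split: split_indicator\<close>)
    also have "\<dots> = emeasure U {x t}" by simp
    also have "\<dots> = 0"
    proof -
      have "emeasure lborel ({0..1::real} \<inter> {x t}) \<le> emeasure lborel {x t}" by (rule emeasure_mono) auto
      then show ?thesis by simp
    qed
    finally show "(\<integral>\<^sup>+y. indicator {x \<in> space (PiM S (\<lambda>_. U)). x s = x t} (x(s := y)) \<partial>U) = 0"
      by simp
  qed
  finally show ?thesis by simp
qed

lemma AE_inj:
  assumes fin: "finite S"
  shows "AE x in PiM S (\<lambda>_. U). inj_on x S"
proof -
  have "AE x in PiM S (\<lambda>_. U). \<forall>p\<in>S \<times> S. fst p \<noteq> snd p \<longrightarrow> x (fst p) \<noteq> x (snd p)"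
  proof (rule AE_finite_allI)
    show "finite (S \<times> S)" using fin by simp
    fix p assume p: "p \<in> S \<times> S"
    show "AE x in PiM S (\<lambda>_. U). fst p \<noteq> snd p \<longrightarrow> x (fst p) \<noteq> x (snd p)"
    proof (cases "fst p = snd p")
      case False
      have "AE x in PiM S (\<lambda>_. U). x (fst p) \<noteq> x (snd p)"
        by (subst AE_iff_measurable[OF _ refl]) (use null_tie[OF fin _ False] p in \<open>auto\<close>)
      then show ?thesis by auto
    qed simp
  qed
  then show ?thesis by eventually_elim (auto simp: inj_on_def)
qed

definition lexlt :: "('s \<Rightarrow> nat) \<Rightarrow> ('s \<Rightarrow> real) \<Rightarrow> 's \<Rightarrow> 's \<Rightarrow> bool" where
  "lexlt idx x t s \<longleftrightarrow> x t < x s \<or> (x t = x s \<and> idx t < idx s)"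

definition tb :: "'s set \<Rightarrow> ('s \<Rightarrow> nat) \<Rightarrow> ('s \<Rightarrow> real) \<Rightarrow> 's \<Rightarrow> real" where
  "tb T idx x s = (if s \<in> T then real (card {t \<in> T. lexlt idx x t s}) else 0)"

lemma lexlt_trans: "lexlt idx x a b \<Longrightarrow> lexlt idx x b c \<Longrightarrow> lexlt idx x a c"
  unfolding lexlt_def by auto

lemma lexlt_irrefl: "\<not> lexlt idx x a a"
  unfolding lexlt_def by auto

lemma lexlt_total: "inj_on idx T \<Longrightarrow> a \<in> T \<Longrightarrow> b \<in> T \<Longrightarrow> a \<noteq> b \<Longrightarrow> lexlt idx x a b \<or> lexlt idx x b a"
  unfolding lexlt_def by (metis inj_on_eq_iff linorder_neqE_nat linorder_neqE_linordered_idom)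

lemma tb_less:
  assumes fin: "finite T" and s: "s \<in> T" and t: "t \<in> T" and l: "lexlt idx x s t"
  shows "tb T idx x s < tb T idx x t"
proof -
  have "{u \<in> T. lexlt idx x u s} \<subset> {u \<in> T. lexlt idx x u t}"
    using l s lexlt_trans[of idx x _ s t] lexlt_irrefl[of idx x s] by blast
  then have "card {u \<in> T. lexlt idx x u s} < card {u \<in> T. lexlt idx x u t}"
    by (rule psubset_card_mono[rotated]) (use fin in simp)
  then show ?thesis using s t unfolding tb_def by simp
qed

lemma tb_less_iff:
  assumes fin: "finite T" and inj: "inj_on idx T" and s: "s \<in> T" and t: "t \<in> T"
  shows "tb T idx x s < tb T idx x t \<longleftrightarrow> lexlt idx x s t"
proof
  assume lt: "tb T idx x s < tb T idx x t"
  show "lexlt idx x s t"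
  proof (rule ccontr)
    assume nl: "\<not> lexlt idx x s t"
    have "s \<noteq> t" using lt by auto
    then have "lexlt idx x t s" using lexlt_total[OF inj s t] nl by auto
    then have "tb T idx x t < tb T idx x s" by (rule tb_less[OF fin t s])
    then show False using lt by simp
  qed
qed (rule tb_less[OF fin s t])

lemma tb_inj:
  assumes fin: "finite T" and inj: "inj_on idx T"
  shows "inj_on (tb T idx x) T"
proof (rule inj_onI)
  fix s t assume s: "s \<in> T" and t: "t \<in> T" and eq: "tb T idx x s = tb T idx x t"
  show "s = t"
  proof (rule ccontr)
    assume "s \<noteq> t"
    then have "lexlt idx x s t \<or> lexlt idx x t s" using lexlt_total[OF inj s t] by auto
    then show False
    proof
      assume "lexlt idx x s t"
      then have "tb T idx x s < tb T idx x t" by (rule tb_less[OF fin s t])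
      then show False using eq by simp
    next
      assume "lexlt idx x t s"
      then have "tb T idx x t < tb T idx x s" by (rule tb_less[OF fin t s])
      then show False using eq by simp
    qed
  qed
qed

lemma tb_order_x:
  assumes fin: "finite T" and inj: "inj_on idx T" and injx: "inj_on x T" and s: "s \<in> T" and t: "t \<in> T"
  shows "tb T idx x s < tb T idx x t \<longleftrightarrow> x s < x t"
  unfolding tb_less_iff[OF fin inj s t] lexlt_def using injx s t by (auto dest: inj_onD)

lemma tb_upd:
  assumes fin: "finite T" and inj: "inj_on idx T" and s: "s \<in> T - {j}" and t: "t \<in> T - {j}"
  shows "tb T idx (x(j := z)) s < tb T idx (x(j := z)) t \<longleftrightarrow> tb T idx x s < tb T idx x t"
  using s t by (simp add: tb_less_iff[OF fin inj] lexlt_def)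

lemma tb_pattern:
  assumes "same_pat T x y"
  shows "tb T idx x = tb T idx y"
proof (rule ext)
  fix s
  show "tb T idx x s = tb T idx y s"
  proof (cases "s \<in> T")
    case True
    have "{t \<in> T. lexlt idx x t s} = {t \<in> T. lexlt idx y t s}"
    proof (rule Collect_cong)
      fix t
      show "(t \<in> T \<and> lexlt idx x t s) = (t \<in> T \<and> lexlt idx y t s)"
      proof (cases "t \<in> T")
        case tT: True
        have "x t < x s \<longleftrightarrow> y t < y s" "x s < x t \<longleftrightarrow> y s < y t"
          using assms True tT unfolding same_pat_def by auto
        then have "x t = x s \<longleftrightarrow> y t = y s" by (metis linorder_neqE_linordered_idom less_irrefl)
        then show ?thesis unfolding lexlt_def using \<open>x t < x s \<longleftrightarrow> y t < y s\<close> by auto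
      qed simp
    qed
    then show ?thesis unfolding tb_def by simp
  qed (simp add: tb_def)
qed

lemma bdl:
  assumes fE: "finite E" and sub: "snd ` E \<subseteq> T" and injr: "inj_on r T" and injr': "inj_on r' T"
    and oe: "\<forall>s\<in>T - {j}. \<forall>t\<in>T - {j}. (r s < r t \<longleftrightarrow> r' s < r' t)"
  shows "\<bar>real (card (ranking E r bs)) - real (card (ranking E r' bs))\<bar> \<le> 1"
proof -
  let ?E0 = "del_s E {j}"
  have fE0: "finite ?E0" using fE unfolding del_s_def by simp
  have ir: "inj_on r (snd ` E)" using injr sub by (rule inj_on_subset)
  have ir': "inj_on r' (snd ` E)" using injr' sub by (rule inj_on_subset)
  have sub0: "snd ` ?E0 \<subseteq> T - {j}" using sub unfolding del_s_def by auto
  have eq0: "ranking ?E0 r bs = ranking ?E0 r' bs"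
    by (rule order_equiv_ranking) (use oe sub0 in blast)
  have c0: "card (fst (run ?E0 r bs)) = card (fst (run ?E0 r' bs))"
    using eq0 card_ranking_run[OF fE0, of r bs] card_ranking_run[OF fE0, of r' bs] by simp
  have a1: "card (fst (run ?E0 r bs)) \<le> card (fst (run E r bs))"
    and a2: "card (fst (run E r bs)) \<le> card (fst (run ?E0 r bs)) + card {j}"
    using sd_card[OF fE ir, of "{j}" bs] by auto
  have b1: "card (fst (run ?E0 r' bs)) \<le> card (fst (run E r' bs))"
    and b2: "card (fst (run E r' bs)) \<le> card (fst (run ?E0 r' bs)) + card {j}"
    using sd_card[OF fE ir', of "{j}" bs] by auto
  show ?thesis
    using a1 a2 b1 b2 c0 card_ranking_run[OF fE, of r bs] card_ranking_run[OF fE, of r' bs]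
    by simp
qed

lemma del_card:
  assumes fE: "finite E" and inj: "inj_on x (snd ` E)" and fD: "finite D"
  shows "card (ranking (del_b (del_s E D) B') x bs) \<le> card (ranking E x bs)"
proof -
  have fE1: "finite (del_s E D)" using fE unfolding del_s_def by simp
  have fE2: "finite (del_b (del_s E D) B')" using fE1 unfolding del_b_def by simp
  have inj1: "inj_on x (snd ` del_s E D)" using inj by (rule inj_on_subset) (auto simp: del_s_def)
  have "card (fst (run (del_b (del_s E D) B') x bs)) \<le> card (fst (run (del_s E D) x bs))"
    by (rule bd_card[OF fE1 inj1])
  also have "\<dots> \<le> card (fst (run E x bs))"
    by (rule sd_card(1)[OF fE inj fD])
  finally show ?thesis using card_ranking_run fE fE2 by metis
qed

lemma hoeffding_step:
  fixes g :: "'a \<Rightarrow> real"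
  assumes N: "prob_space N" and g[measurable]: "g \<in> borel_measurable N"
    and bnd: "\<And>y. y \<in> space N \<Longrightarrow> \<bar>g y\<bar> \<le> K"
    and dif: "\<And>y y'. y \<in> space N \<Longrightarrow> y' \<in> space N \<Longrightarrow> g y - g y' \<le> c"
    and l: "l > 0"
  shows "(\<integral>\<^sup>+y. ennreal (exp (l * (g y - (\<integral>y. g y \<partial>N)))) \<partial>N) \<le> ennreal (exp (l\<^sup>2 * c\<^sup>2 / 8))"
proof -
  interpret prob_space N by (rule N)
  define a where "a = (INF y\<in>space N. g y)"
  have bdd: "bdd_below (g ` space N)"
    by (rule bdd_belowI[of _ "-K"]) (use bnd in force)
  have ne: "space N \<noteq> {}" by (rule not_empty)
  have lo: "a \<le> g y" if "y \<in> space N" for y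
    unfolding a_def using bdd that by (simp add: cINF_lower)
  have hi: "g y \<le> a + c" if "y \<in> space N" for y
  proof -
    have "g y - c \<le> a" unfolding a_def
      by (rule cINF_greatest[OF ne]) (use dif that in force)
    then show ?thesis by simp
  qed
  interpret interval_bounded_random_variable N g a "a + c"
  proof unfold_locales
    show "AE x in N. g x \<in> {a..a + c}" using lo hi by (intro AE_I2) auto
  qed simp
  have "(\<integral>\<^sup>+y. ennreal (exp (l * (g y - expectation g))) \<partial>N) \<le> ennreal (exp (l\<^sup>2 * (a + c - a)\<^sup>2 / 8))"
    by (rule Hoeffdings_lemma_nn_integral[OF l])
  then show ?thesis by simp
qed

context product_prob_space
begin

lemma mcdiarmid_mgf:
  fixes f :: "('i \<Rightarrow> 'a) \<Rightarrow> real"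
  assumes "finite J"
    and "f \<in> borel_measurable (PiM J M)"
    and "\<And>x. x \<in> space (PiM J M) \<Longrightarrow> \<bar>f x\<bar> \<le> K"
    and "\<And>x i y. x \<in> space (PiM J M) \<Longrightarrow> i \<in> J \<Longrightarrow> y \<in> space (M i) \<Longrightarrow> \<bar>f x - f (x(i := y))\<bar> \<le> c i"
    and l: "l > 0"
  shows "(\<integral>\<^sup>+x. ennreal (exp (l * (f x - (\<integral>x. f x \<partial>PiM J M)))) \<partial>PiM J M)
           \<le> ennreal (exp (l\<^sup>2 * (\<Sum>i\<in>J. (c i)\<^sup>2) / 8))"
  using assms(1-4)
proof (induction J arbitrary: f rule: finite_induct)
  case empty
  define u :: "'i \<Rightarrow> 'a" where "u = (\<lambda>_. undefined)"
  have P: "PiM {} M = count_space {u}" unfolding u_def by (rule PiM_empty)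
  show ?case unfolding P
    by (simp add: nn_integral_count_space_finite lebesgue_integral_count_space_finite)
next
  case (insert i J)
  let ?F = "PiM (insert i J) M"
  let ?P = "PiM J M"
  interpret PP: prob_space ?P by (rule prob_space_PiM) (rule prob_space)
  interpret FF: prob_space ?F by (rule prob_space_PiM) (rule prob_space)

  have fm[measurable]: "f \<in> borel_measurable ?F" by (rule insert.prems(1))
  have fK: "\<And>x. x \<in> space ?F \<Longrightarrow> \<bar>f x\<bar> \<le> K" by (rule insert.prems(2))
  have fc: "\<And>x j y. x \<in> space ?F \<Longrightarrow> j \<in> insert i J \<Longrightarrow> y \<in> space (M j) \<Longrightarrow> \<bar>f x - f (x(j := y))\<bar> \<le> c j"
    by (rule insert.prems(3))
  have upd: "x(i := y) \<in> space ?F" if "x \<in> space ?P" "y \<in> space (M i)" for x y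
    using that by (simp add: space_PiM PiE_fun_upd)
  have fy_meas: "(\<lambda>y. f (x(i := y))) \<in> borel_measurable (M i)" if "x \<in> space ?P" for x
    using measurable_comp[OF measurable_component_update fm, OF that \<open>i \<notin> J\<close>] unfolding comp_def .
  have fy_int: "integrable (M i) (\<lambda>y. f (x(i := y)))" if "x \<in> space ?P" for x
    by (rule M.integrable_const_bound[where B = K]) (use fK upd that fy_meas in \<open>auto intro!: AE_I2\<close>)
  have fyK: "- K \<le> f (x(i := y)) \<and> f (x(i := y)) \<le> K" if "x \<in> space ?P" "y \<in> space (M i)" for x y
    using fK[OF upd[OF that]] by (auto simp: abs_le_iff)
  define h where "h x = (\<integral>y. f (x(i := y)) \<partial>M i)" for x
  have pm: "(\<lambda>(x, y). f (x(i := y))) \<in> borel_measurable (?P \<Otimes>\<^sub>M M i)"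
    by measurable
  have hm: "h \<in> borel_measurable ?P"
    unfolding h_def using M.borel_measurable_lebesgue_integral[OF pm] by simp
  have hK: "\<bar>h x\<bar> \<le> K" if x: "x \<in> space ?P" for x
  proof -
    have "h x \<le> K" unfolding h_def
      by (rule M.integral_le_const[OF fy_int[OF x]]) (use fyK x in \<open>auto intro!: AE_I2\<close>)
    moreover have "-K \<le> h x" unfolding h_def
      by (rule M.integral_ge_const[OF fy_int[OF x]]) (use fyK x in \<open>auto intro!: AE_I2\<close>)
    ultimately show ?thesis by auto
  qed
  have hc: "\<bar>h x - h (x(j := z))\<bar> \<le> c j" if x: "x \<in> space ?P" and j: "j \<in> J" and z: "z \<in> space (M j)" for x j z
  proof -
    have ij: "i \<noteq> j" using j insert.hyps by auto
    have xz: "x(j := z) \<in> space ?P" using x z j PiE_fun_upd[of z "\<lambda>i. space (M i)" j x J] by (simp add: space_PiM insert_absorb)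
    have swap: "x(j := z, i := y) = x(i := y, j := z)" for y using ij by (intro fun_upd_twist) auto
    have d: "\<bar>f (x(i := y)) - f (x(j := z, i := y))\<bar> \<le> c j" if y: "y \<in> space (M i)" for y
      unfolding swap using fc[OF upd[OF x y], of j z] j z by simp
    have d': "- c j \<le> f (x(i := y)) - f (x(j := z, i := y)) \<and> f (x(i := y)) - f (x(j := z, i := y)) \<le> c j"
      if y: "y \<in> space (M i)" for y using d[OF y] by (auto simp: abs_le_iff)
    have eq: "h x - h (x(j := z)) = (\<integral>y. f (x(i := y)) - f (x(j := z, i := y)) \<partial>M i)"
      unfolding h_def by (rule Bochner_Integration.integral_diff[symmetric]) (use fy_int x xz in auto)
    have int: "integrable (M i) (\<lambda>y. f (x(i := y)) - f (x(j := z, i := y)))"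
      using fy_int x xz by auto
    have "(\<integral>y. f (x(i := y)) - f (x(j := z, i := y)) \<partial>M i) \<le> c j"
      by (rule M.integral_le_const[OF int]) (rule AE_I2, drule d', blast)
    moreover have "- c j \<le> (\<integral>y. f (x(i := y)) - f (x(j := z, i := y)) \<partial>M i)"
      by (rule M.integral_ge_const[OF int]) (rule AE_I2, drule d', blast)
    ultimately show ?thesis unfolding eq by auto
  qed
  have IH: "(\<integral>\<^sup>+x. ennreal (exp (l * (h x - (\<integral>x. h x \<partial>?P)))) \<partial>?P) \<le> ennreal (exp (l\<^sup>2 * (\<Sum>i\<in>J. (c i)\<^sup>2) / 8))"
    by (rule insert.IH[OF hm hK hc]) auto
  have fint: "integrable ?F f"
    by (rule FF.integrable_const_bound[where B = K]) (use fK in \<open>auto intro!: AE_I2\<close>)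
  have Ef: "(\<integral>x. f x \<partial>?F) = (\<integral>x. h x \<partial>?P)"
    unfolding h_def by (rule product_integral_insert[OF insert.hyps(1,2) fint])
  define m where "m = (\<integral>x. f x \<partial>?F)"
  have step: "(\<integral>\<^sup>+y. ennreal (exp (l * (f (x(i := y)) - m))) \<partial>M i)
      \<le> ennreal (exp (l * (h x - m))) * ennreal (exp (l\<^sup>2 * (c i)\<^sup>2 / 8))" if x: "x \<in> space ?P" for x
  proof -
    have "(\<integral>\<^sup>+y. ennreal (exp (l * (f (x(i := y)) - m))) \<partial>M i)
        = (\<integral>\<^sup>+y. ennreal (exp (l * (h x - m))) * ennreal (exp (l * (f (x(i := y)) - h x))) \<partial>M i)"
      by (intro nn_integral_cong) (simp add: ennreal_mult'[symmetric] exp_add[symmetric] algebra_simps)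
    also have "\<dots> = ennreal (exp (l * (h x - m))) * (\<integral>\<^sup>+y. ennreal (exp (l * (f (x(i := y)) - h x))) \<partial>M i)"
      by (rule nn_integral_cmult) (use fy_meas[OF x] in measurable)
    also have "(\<integral>\<^sup>+y. ennreal (exp (l * (f (x(i := y)) - h x))) \<partial>M i) \<le> ennreal (exp (l\<^sup>2 * (c i)\<^sup>2 / 8))"
      unfolding h_def
    proof (rule hoeffding_step[OF prob_space fy_meas[OF x] _ _ l])
      show "\<bar>f (x(i := y))\<bar> \<le> K" if "y \<in> space (M i)" for y using fK upd x that by blast
      show "f (x(i := y)) - f (x(i := y')) \<le> c i" if "y \<in> space (M i)" "y' \<in> space (M i)" for y y'
        using fc[OF upd[OF x that(2)], of i y] that by simp
    qed
    finally show ?thesis by (simp add: mult_left_mono)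
  qed
  have "(\<integral>\<^sup>+x. ennreal (exp (l * (f x - m))) \<partial>?F)
      = (\<integral>\<^sup>+x. (\<integral>\<^sup>+y. ennreal (exp (l * (f (x(i := y)) - m))) \<partial>M i) \<partial>?P)"
    by (rule product_nn_integral_insert[OF insert.hyps(1,2)]) measurable
  also have "\<dots> \<le> (\<integral>\<^sup>+x. ennreal (exp (l * (h x - m))) * ennreal (exp (l\<^sup>2 * (c i)\<^sup>2 / 8)) \<partial>?P)"
    by (rule nn_integral_mono) (rule step)
  also have "\<dots> = (\<integral>\<^sup>+x. ennreal (exp (l * (h x - m))) \<partial>?P) * ennreal (exp (l\<^sup>2 * (c i)\<^sup>2 / 8))"
    by (rule nn_integral_multc) (use hm in measurable)
  also have "\<dots> \<le> ennreal (exp (l\<^sup>2 * (\<Sum>i\<in>J. (c i)\<^sup>2) / 8)) * ennreal (exp (l\<^sup>2 * (c i)\<^sup>2 / 8))"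
    using IH unfolding m_def Ef by (rule mult_right_mono) simp
  also have "\<dots> = ennreal (exp (l\<^sup>2 * (\<Sum>i\<in>insert i J. (c i)\<^sup>2) / 8))"
    using insert.hyps by (simp add: ennreal_mult'[symmetric] exp_add[symmetric] add_divide_distrib algebra_simps)
  finally show ?case unfolding m_def .
qed

lemma mcdiarmid_le:
  fixes f :: "('i \<Rightarrow> 'a) \<Rightarrow> real"
  assumes fin: "finite J"
    and fm[measurable]: "f \<in> borel_measurable (PiM J M)"
    and fK: "\<And>x. x \<in> space (PiM J M) \<Longrightarrow> \<bar>f x\<bar> \<le> K"
    and fc: "\<And>x i y. x \<in> space (PiM J M) \<Longrightarrow> i \<in> J \<Longrightarrow> y \<in> space (M i) \<Longrightarrow> \<bar>f x - f (x(i := y))\<bar> \<le> c i"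
    and t: "t > 0" and C: "(\<Sum>i\<in>J. (c i)\<^sup>2) > 0"
  shows "measure (PiM J M) {x \<in> space (PiM J M). f x \<le> (\<integral>x. f x \<partial>PiM J M) - t}
           \<le> exp (- 2 * t\<^sup>2 / (\<Sum>i\<in>J. (c i)\<^sup>2))"
proof -
  let ?P = "PiM J M"
  interpret PP: prob_space ?P by (rule prob_space_PiM) (rule prob_space)
  define C where "C = (\<Sum>i\<in>J. (c i)\<^sup>2)"
  define l where "l = 4 * t / C"
  have Cp: "C > 0" using C unfolding C_def .
  have l: "l > 0" using t Cp unfolding l_def by simp
  define g where "g x = - f x" for x
  have gm[measurable]: "g \<in> borel_measurable ?P" unfolding g_def by measurable
  have mgf: "(\<integral>\<^sup>+x. ennreal (exp (l * (g x - (\<integral>x. g x \<partial>?P)))) \<partial>?P) \<le> ennreal (exp (l\<^sup>2 * C / 8))"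
    unfolding C_def
  proof (rule mcdiarmid_mgf[OF fin gm _ _ l])
    show "\<bar>g x\<bar> \<le> K" if "x \<in> space ?P" for x using fK[OF that] unfolding g_def by simp
    show "\<bar>g x - g (x(i := y))\<bar> \<le> c i" if "x \<in> space ?P" "i \<in> J" "y \<in> space (M i)" for x i y
      using fc[OF that] unfolding g_def by simp
  qed
  have Eg: "(\<integral>x. g x \<partial>?P) = - (\<integral>x. f x \<partial>?P)" unfolding g_def by simp
  have set_eq: "{x \<in> space ?P. f x \<le> (\<integral>x. f x \<partial>?P) - t} = {x \<in> space ?P. t \<le> g x - (\<integral>x. g x \<partial>?P)}"
    unfolding Eg g_def by auto
  have "emeasure ?P {x \<in> space ?P. t \<le> g x - (\<integral>x. g x \<partial>?P)}
      \<le> ennreal (exp (- l * t)) * (\<integral>\<^sup>+x. ennreal (exp (l * (g x - (\<integral>x. g x \<partial>?P)))) * indicator (space ?P) x \<partial>?P)"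
    by (rule Chernoff_ineq_nn_integral_ge[OF l]) (simp_all, measurable)
  also have "(\<integral>\<^sup>+x. ennreal (exp (l * (g x - (\<integral>x. g x \<partial>?P)))) * indicator (space ?P) x \<partial>?P)
      = (\<integral>\<^sup>+x. ennreal (exp (l * (g x - (\<integral>x. g x \<partial>?P)))) \<partial>?P)"
    by (rule nn_integral_cong) simp
  also have "ennreal (exp (- l * t)) * \<dots> \<le> ennreal (exp (- l * t)) * ennreal (exp (l\<^sup>2 * C / 8))"
    by (rule mult_left_mono[OF mgf]) simp
  also have "\<dots> = ennreal (exp (- 2 * t\<^sup>2 / C))"
  proof -
    have "- l * t + l\<^sup>2 * C / 8 = - 2 * t\<^sup>2 / C"
      using Cp unfolding l_def by (simp add: field_simps power2_eq_square)
    then show ?thesis by (simp add: ennreal_mult'[symmetric] exp_add[symmetric])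
  qed
  finally have "emeasure ?P {x \<in> space ?P. f x \<le> (\<integral>x. f x \<partial>?P) - t} \<le> ennreal (exp (- 2 * t\<^sup>2 / C))"
    unfolding set_eq .
  then show ?thesis unfolding C_def
    by (simp add: PP.emeasure_eq_measure)
qed

end

definition clamp :: "real \<Rightarrow> real" where "clamp r = max 0 (min 1 r)"
definition phi :: "real \<Rightarrow> real" where "phi r = exp (clamp r - 1)"

lemma clamp_mono: "a \<le> b \<Longrightarrow> clamp a \<le> clamp b" unfolding clamp_def by auto
lemma clamp_bounds: "0 \<le> clamp r" "clamp r \<le> 1" unfolding clamp_def by auto
lemma clamp_id: "r \<in> {0..1} \<Longrightarrow> clamp r = r" unfolding clamp_def by auto
lemma phi_pos: "0 < phi r" unfolding phi_def by simp
lemma phi_le1: "phi r \<le> 1" unfolding phi_def using clamp_bounds(2)[of r] by simp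
lemma phi_mono: "a \<le> b \<Longrightarrow> phi a \<le> phi b" unfolding phi_def using clamp_mono by simp

lemma phi_meas[measurable]: "phi \<in> borel_measurable borel"
  unfolding phi_def clamp_def by measurable

lemma matching_iff:
  assumes m: "is_matching M" and p: "p \<in> M" "q \<in> M"
  shows "fst p = fst q \<longleftrightarrow> snd p = snd q"
proof -
  have "\<forall>x\<in>M. \<forall>y\<in>M. (fst x = fst y \<longleftrightarrow> snd x = snd y)"
    using m unfolding is_matching_def by (simp add: case_prod_beta)
  then show ?thesis using p by blast
qed

lemma matching_unique_fst:
  assumes m: "is_matching M" and p: "p \<in> M" "q \<in> M" and eq: "fst p = fst q"
  shows "p = q"
  using matching_iff[OF m p] eq by (simp add: prod_eq_iff)

lemma matching_unique_snd:
  assumes m: "is_matching M" and p: "p \<in> M" "q \<in> M" and eq: "snd p = snd q"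
  shows "p = q"
  using matching_iff[OF m p] eq by (simp add: prod_eq_iff)

lemma sum_match_fst:
  assumes m: "is_matching M" and fin: "finite M" and b: "b \<in> fst ` M"
  shows "(\<Sum>p\<in>M. if fst p = b then u else 0) = (u :: real)"
proof -
  obtain p0 where p0: "p0 \<in> M" "fst p0 = b" using b by auto
  have "(\<Sum>p\<in>M. if fst p = b then u else 0) = (\<Sum>p\<in>M. if p = p0 then u else 0)"
  proof (rule sum.cong[OF refl])
    fix p assume p: "p \<in> M"
    have "fst p = b \<longleftrightarrow> p = p0" using matching_unique_fst[OF m p p0(1)] p0(2) by auto
    then show "(if fst p = b then u else 0) = (if p = p0 then u else 0)" by simp
  qed
  also have "\<dots> = u" using fin p0(1) by simp
  finally show ?thesis .
qed

lemma sum_match_snd: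
  assumes m: "is_matching M" and fin: "finite M" and b: "b \<in> snd ` M"
  shows "(\<Sum>p\<in>M. if snd p = b then u else 0) = (u :: real)"
proof -
  obtain p0 where p0: "p0 \<in> M" "snd p0 = b" using b by auto
  have "(\<Sum>p\<in>M. if snd p = b then u else 0) = (\<Sum>p\<in>M. if p = p0 then u else 0)"
  proof (rule sum.cong[OF refl])
    fix p assume p: "p \<in> M"
    have "snd p = b \<longleftrightarrow> p = p0" using matching_unique_snd[OF m p p0(1)] p0(2) by auto
    then show "(if snd p = b then u else 0) = (if p = p0 then u else 0)" by simp
  qed
  also have "\<dots> = u" using fin p0(1) by simp
  finally show ?thesis .
qed

locale rk =
  fixes S :: "'s set" and E :: "('b \<times> 's) set" and Ms :: "('b \<times> 's) set" and bs :: "'b list"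
  assumes finS: "finite S" and finE: "finite E" and Esub: "snd ` E \<subseteq> S"
    and Ms_sub: "Ms \<subseteq> E" and Ms_match: "is_matching Ms" and bs_cover: "fst ` Ms \<subseteq> set bs"
begin

definition "Bs = fst ` Ms"
definition "Ss = snd ` Ms"
definition "Es = del_b (del_s E (S - Ss)) Bs"

lemma finMs: "finite Ms" using finE Ms_sub by (rule finite_subset[rotated])
lemma finEs: "finite Es" using finE unfolding Es_def del_b_def del_s_def by simp
lemma Es_sub: "Es \<subseteq> E" unfolding Es_def del_b_def del_s_def by auto
lemma Es_mem: "e \<in> Es \<Longrightarrow> fst e \<in> Bs \<and> snd e \<in> Ss"
  unfolding Es_def del_b_def del_s_def using Esub Ss_def by auto
lemma Ms_Es: "Ms \<subseteq> Es"
  unfolding Es_def del_b_def del_s_def Bs_def Ss_def using Ms_sub by auto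
lemma Ss_sub: "Ss \<subseteq> S" unfolding Ss_def using Ms_sub Esub by auto
lemma snd_Es: "snd ` Es \<subseteq> S" using Es_sub Esub by auto

definition Mx :: "('s \<Rightarrow> real) \<Rightarrow> ('b \<times> 's) set" where "Mx x = ranking Es x bs"

lemma Mx_sub: "Mx x \<subseteq> Es"
  using good_run[OF finEs, of x bs] unfolding Mx_def ranking_def good_st_def by auto

definition alpha :: "'b \<Rightarrow> ('s \<Rightarrow> real) \<Rightarrow> real" where
  "alpha i x = (\<Sum>e\<in>Es. if e \<in> Mx x \<and> fst e = i then 1 - phi (x (snd e)) else 0)"
definition beta :: "'s \<Rightarrow> ('s \<Rightarrow> real) \<Rightarrow> real" where
  "beta j x = (\<Sum>e\<in>Es. if e \<in> Mx x \<and> snd e = j then phi (x (snd e)) else 0)"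

lemma alpha_ge:
  assumes e: "e \<in> Mx x" and i: "fst e = i"
  shows "1 - phi (x (snd e)) \<le> alpha i x"
proof -
  have eE: "e \<in> Es" using e Mx_sub by blast
  have "(if e \<in> Mx x \<and> fst e = i then 1 - phi (x (snd e)) else 0)
      \<le> (\<Sum>e\<in>Es. if e \<in> Mx x \<and> fst e = i then 1 - phi (x (snd e)) else 0)"
    by (rule member_le_sum[OF eE _ finEs]) (simp add: phi_le1)
  then show ?thesis unfolding alpha_def using e i by simp
qed

lemma beta_ge:
  assumes e: "e \<in> Mx x" and j: "snd e = j"
  shows "phi (x (snd e)) \<le> beta j x"
proof -
  have eE: "e \<in> Es" using e Mx_sub by blast
  have "(if e \<in> Mx x \<and> snd e = j then phi (x (snd e)) else 0)
      \<le> (\<Sum>e\<in>Es. if e \<in> Mx x \<and> snd e = j then phi (x (snd e)) else 0)"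
    by (rule member_le_sum[OF eE _ finEs]) (simp add: phi_pos less_imp_le)
  then show ?thesis unfolding beta_def using e j by simp
qed

lemma alpha_nn: "0 \<le> alpha i x"
  unfolding alpha_def by (rule sum_nonneg) (use phi_le1 in auto)

lemma beta_nn: "0 \<le> beta j x"
  unfolding beta_def by (rule sum_nonneg) (use phi_pos in \<open>auto simp: less_imp_le\<close>)

lemma sum_alpha_beta:
  "(\<Sum>p\<in>Ms. alpha (fst p) x + beta (snd p) x) = real (card (Mx x))"
proof -
  have A: "(\<Sum>p\<in>Ms. alpha (fst p) x) = (\<Sum>e\<in>Es. if e \<in> Mx x then 1 - phi (x (snd e)) else 0)"
  proof -
    have "(\<Sum>p\<in>Ms. alpha (fst p) x)
        = (\<Sum>e\<in>Es. \<Sum>p\<in>Ms. if e \<in> Mx x \<and> fst e = fst p then 1 - phi (x (snd e)) else 0)"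
      unfolding alpha_def by (rule sum.swap)
    also have "\<dots> = (\<Sum>e\<in>Es. if e \<in> Mx x then 1 - phi (x (snd e)) else 0)"
    proof (rule sum.cong[OF refl])
      fix e assume e: "e \<in> Es"
      have "(\<Sum>p\<in>Ms. if e \<in> Mx x \<and> fst e = fst p then 1 - phi (x (snd e)) else 0)
          = (if e \<in> Mx x then (\<Sum>p\<in>Ms. if fst p = fst e then 1 - phi (x (snd e)) else 0) else 0)"
        by (cases "e \<in> Mx x") (simp_all add: eq_commute[of "fst e"])
      also have "\<dots> = (if e \<in> Mx x then 1 - phi (x (snd e)) else 0)"
        using sum_match_fst[OF Ms_match finMs, of "fst e"] Es_mem[OF e] unfolding Bs_def by auto
      finally show "(\<Sum>p\<in>Ms. if e \<in> Mx x \<and> fst e = fst p then 1 - phi (x (snd e)) else 0)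
          = (if e \<in> Mx x then 1 - phi (x (snd e)) else 0)" .
    qed
    finally show ?thesis .
  qed
  have B: "(\<Sum>p\<in>Ms. beta (snd p) x) = (\<Sum>e\<in>Es. if e \<in> Mx x then phi (x (snd e)) else 0)"
  proof -
    have "(\<Sum>p\<in>Ms. beta (snd p) x)
        = (\<Sum>e\<in>Es. \<Sum>p\<in>Ms. if e \<in> Mx x \<and> snd e = snd p then phi (x (snd e)) else 0)"
      unfolding beta_def by (rule sum.swap)
    also have "\<dots> = (\<Sum>e\<in>Es. if e \<in> Mx x then phi (x (snd e)) else 0)"
    proof (rule sum.cong[OF refl])
      fix e assume e: "e \<in> Es"
      have "(\<Sum>p\<in>Ms. if e \<in> Mx x \<and> snd e = snd p then phi (x (snd e)) else 0)
          = (if e \<in> Mx x then (\<Sum>p\<in>Ms. if snd p = snd e then phi (x (snd e)) else 0) else 0)"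
        by (cases "e \<in> Mx x") (simp_all add: eq_commute[of "snd e"])
      also have "\<dots> = (if e \<in> Mx x then phi (x (snd e)) else 0)"
        using sum_match_snd[OF Ms_match finMs, of "snd e"] Es_mem[OF e] unfolding Ss_def by auto
      finally show "(\<Sum>p\<in>Ms. if e \<in> Mx x \<and> snd e = snd p then phi (x (snd e)) else 0)
          = (if e \<in> Mx x then phi (x (snd e)) else 0)" .
    qed
    finally show ?thesis .
  qed
  have "(\<Sum>p\<in>Ms. alpha (fst p) x + beta (snd p) x)
      = (\<Sum>e\<in>Es. (if e \<in> Mx x then 1 - phi (x (snd e)) else 0) + (if e \<in> Mx x then phi (x (snd e)) else 0))"
    unfolding sum.distrib A B ..
  also have "\<dots> = (\<Sum>e\<in>Es. if e \<in> Mx x then 1 else 0)"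
    by (rule sum.cong[OF refl]) simp
  also have "\<dots> = real (card (Es \<inter> Mx x))"
    using finEs by (simp add: sum.If_cases)
  also have "Es \<inter> Mx x = Mx x" using Mx_sub by auto
  finally show ?thesis .
qed

end

context rk
begin

definition E0 :: "'s \<Rightarrow> ('b \<times> 's) set" where "E0 j = del_s Es {j}"
definition Sp :: "'b \<Rightarrow> 's \<Rightarrow> ('s \<Rightarrow> real) \<Rightarrow> 's set" where
  "Sp i j x' = {s. (i, s) \<in> ranking (E0 j) x' bs}"
definition yc :: "'b \<Rightarrow> 's \<Rightarrow> ('s \<Rightarrow> real) \<Rightarrow> real" where
  "yc i j x' = Min (insert 1 ((\<lambda>s. clamp (x' s)) ` Sp i j x'))"

lemma finE0: "finite (E0 j)" using finEs unfolding E0_def del_s_def by simp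

lemma ranking_E0_sub: "ranking (E0 j) x bs \<subseteq> E0 j"
  using good_run[OF finE0, of j x bs] unfolding ranking_def good_st_def by auto

lemma E0_snd: "(a, s) \<in> E0 j \<Longrightarrow> s \<noteq> j" unfolding E0_def del_s_def by auto

lemma finSp: "finite (Sp i j x')"
proof -
  have "Sp i j x' \<subseteq> snd ` E0 j" using ranking_E0_sub unfolding Sp_def by force
  then show ?thesis by (rule finite_subset) (rule finite_imageI[OF finE0])
qed

lemma yc_le1: "yc i j x' \<le> 1"
  unfolding yc_def using finSp by (intro Min_le) auto

lemma yc_ge0: "0 \<le> yc i j x'"
  unfolding yc_def using finSp clamp_bounds by simp

lemma yc_le: "s \<in> Sp i j x' \<Longrightarrow> yc i j x' \<le> clamp (x' s)"
  unfolding yc_def using finSp by (intro Min_le) auto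

lemma yc_attained: "yc i j x' \<noteq> 1 \<Longrightarrow> \<exists>s\<in>Sp i j x'. yc i j x' = clamp (x' s)"
proof -
  have "yc i j x' \<in> insert 1 ((\<lambda>s. clamp (x' s)) ` Sp i j x')"
    unfolding yc_def using finSp by (intro Min_in) auto
  then show "yc i j x' \<noteq> 1 \<Longrightarrow> \<exists>s\<in>Sp i j x'. yc i j x' = clamp (x' s)" by auto
qed

lemma inner_bound:
  assumes ij: "(i, j) \<in> Ms" and inj: "inj_on x' (S - {j})" and y01: "y \<in> {0..1}"
    and yn: "y \<notin> x' ` (S - {j})" and yne: "y \<noteq> yc i j x'"
  shows "(1 - exp (yc i j x' - 1)) + (if y \<le> yc i j x' then exp (y - 1) else 0)
           \<le> alpha i (x'(j := y)) + beta j (x'(j := y))"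
proof -
  define x where "x = x'(j := y)"
  define c where "c = yc i j x'"
  have ijE: "(i, j) \<in> Es" using Ms_Es ij by blast
  have jS: "j \<in> S" using ij Ss_sub unfolding Ss_def by force
  have ib: "i \<in> set bs" using bs_cover ij by force
  have inj1: "inj_on x (S - {j})"
  proof -
    have "inj_on x (S - {j}) = inj_on x' (S - {j})" by (rule inj_on_cong) (simp add: x_def)
    then show ?thesis using inj by simp
  qed
  have img: "x ` (S - {j}) = x' ` (S - {j})" unfolding x_def by (rule image_cong) auto
  have Sins: "S = insert j (S - {j})" using jS by auto
  have injS: "inj_on x S"
    by (subst Sins, subst inj_on_insert) (use inj1 img yn in \<open>simp add: x_def\<close>)
  have injEs: "inj_on x (snd ` Es)" using injS snd_Es by (rule inj_on_subset)
  have R0: "ranking (E0 j) x bs = ranking (E0 j) x' bs"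
  proof (rule order_equiv_ranking)
    show "\<forall>s\<in>snd ` E0 j. \<forall>t\<in>snd ` E0 j. (x s < x t) = (x' s < x' t)"
      using E0_snd unfolding x_def by force
  qed
  have Mxr: "Mx x = snd (run Es x bs)" unfolding Mx_def ranking_run ..
  have A: "1 - exp (c - 1) \<le> alpha i x"
  proof (cases "c = 1")
    case True
    then show ?thesis using alpha_nn by simp
  next
    case False
    then obtain s' where s': "s' \<in> Sp i j x'" and cs: "c = clamp (x' s')"
      using yc_attained unfolding c_def by blast
    have is': "(i, s') \<in> ranking (E0 j) x' bs" using s' unfolding Sp_def by simp
    then have s'j: "s' \<noteq> j" using ranking_E0_sub E0_snd by blast
    have "(i, s') \<in> snd (run (del_s Es {j}) x bs)" using is' R0 unfolding E0_def ranking_run by simp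
    then obtain s where s: "(i, s) \<in> snd (run Es x bs)" and xs: "x s \<le> x s'"
      using sd_partner[OF finEs injEs] by blast
    have "1 - phi (x (snd (i, s))) \<le> alpha i x" by (rule alpha_ge) (use s Mxr in auto)
    moreover have "phi (x s) \<le> exp (c - 1)"
      using phi_mono[OF xs] s'j unfolding cs phi_def x_def by simp
    ultimately show ?thesis by simp
  qed
  have B: "(if y \<le> c then exp (y - 1) else 0) \<le> beta j x"
  proof (cases "y \<le> c")
    case False
    then show ?thesis using beta_nn by simp
  next
    case True
    then have yc: "y < c" using yne unfolding c_def by simp
    have jm: "j \<in> fst (run Es x bs)"
    proof (rule ccontr)
      assume jn: "j \<notin> fst (run Es x bs)"
      have eq: "run (del_s Es {j}) x bs = run Es x bs" by (rule j_run[OF finEs injEs jn])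
      obtain s where s: "(i, s) \<in> snd (run Es x bs)" and xs: "x s < x j"
        using unmatched_partner[OF finEs injEs ijE ib jn] by blast
      have "(i, s) \<in> ranking (E0 j) x' bs"
        using s eq R0 unfolding E0_def ranking_run by simp
      then have sSp: "s \<in> Sp i j x'" and sj: "s \<noteq> j"
        unfolding Sp_def using ranking_E0_sub E0_snd by blast+
      have "c \<le> clamp (x' s)" using yc_le[OF sSp] unfolding c_def .
      also have "x' s = x s" using sj unfolding x_def by simp
      also have "clamp (x s) \<le> clamp y" using xs unfolding x_def by (intro clamp_mono) simp
      also have "clamp y = y" using y01 by (rule clamp_id)
      finally show False using yc by simp
    qed
    have "fst (run Es x bs) = snd ` snd (run Es x bs)"
      using good_run[OF finEs, of x bs] unfolding good_st_def run_def by simp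
    then obtain b where b: "(b, j) \<in> Mx x" using jm Mxr by force
    have "phi (x (snd (b, j))) \<le> beta j x" by (rule beta_ge[OF b]) simp
    moreover have "phi (x j) = exp (y - 1)" unfolding phi_def x_def using clamp_id[OF y01] by simp
    ultimately show ?thesis using True by simp
  qed
  show ?thesis using A B unfolding x_def c_def by simp
qed

lemma Mx_pred[measurable]: "Measurable.pred (PiM S (\<lambda>_. U)) (\<lambda>x. e \<in> Mx x)"
proof (rule pattern_meas[OF finS])
  fix x y assume "same_pat S x y"
  then have "Mx x = Mx y" unfolding Mx_def by (rule same_pat_ranking[OF snd_Es])
  then show "(e \<in> Mx x) = (e \<in> Mx y)" by simp
qed simp

lemma alpha_meas[measurable]: "alpha i \<in> borel_measurable (PiM S (\<lambda>_. U))"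
proof -
  note comp_meas[measurable]
  have "alpha i = (\<lambda>x. \<Sum>e\<in>Es. if e \<in> Mx x \<and> fst e = i then 1 - phi (x (snd e)) else 0)"
    by (rule ext) (simp add: alpha_def)
  moreover have "(\<lambda>x. \<Sum>e\<in>Es. if e \<in> Mx x \<and> fst e = i then 1 - phi (x (snd e)) else 0) \<in> borel_measurable (PiM S (\<lambda>_. U))"
    by measurable
  ultimately show ?thesis by simp
qed

lemma beta_meas[measurable]: "beta j \<in> borel_measurable (PiM S (\<lambda>_. U))"
proof -
  note comp_meas[measurable]
  have "beta j = (\<lambda>x. \<Sum>e\<in>Es. if e \<in> Mx x \<and> snd e = j then phi (x (snd e)) else 0)"
    by (rule ext) (simp add: beta_def)
  moreover have "(\<lambda>x. \<Sum>e\<in>Es. if e \<in> Mx x \<and> snd e = j then phi (x (snd e)) else 0) \<in> borel_measurable (PiM S (\<lambda>_. U))"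
    by measurable
  ultimately show ?thesis by simp
qed

end

lemma U_integral_calc:
  fixes c :: real
  assumes c0: "0 \<le> c" and c1: "c \<le> 1"
  shows "(\<integral>\<^sup>+y. ennreal ((1 - exp (c - 1)) + indicator {0..c} y * exp (y - 1)) \<partial>U) = ennreal (1 - exp (-1))"
proof -
  have a0: "0 \<le> 1 - exp (c - 1)" using c1 by simp
  have "(\<integral>\<^sup>+y. ennreal ((1 - exp (c - 1)) + indicator {0..c} y * exp (y - 1)) \<partial>U)
     = (\<integral>\<^sup>+y. ennreal ((1 - exp (c - 1)) + indicator {0..c} y * exp (y - 1)) * indicator {0..1} y \<partial>lborel) / emeasure lborel {0..1::real}"
  proof (rule nn_integral_uniform_measure)
    show "(\<lambda>y. ennreal ((1 - exp (c - 1)) + indicator {0..c} y * exp (y - 1))) \<in> borel_measurable lborel"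
      unfolding measurable_lborel1 by measurable
  qed simp
  also have "emeasure lborel {0..1::real} = 1" by simp
  also have "(\<integral>\<^sup>+y. ennreal ((1 - exp (c - 1)) + indicator {0..c} y * exp (y - 1)) * indicator {0..1} y \<partial>lborel)
      = (\<integral>\<^sup>+y. ennreal (1 - exp (c - 1)) * indicator {0..1} y + ennreal (exp (y - 1)) * indicator {0..c} y \<partial>lborel)"
  proof (rule nn_integral_cong)
    fix y :: real
    show "ennreal ((1 - exp (c - 1)) + indicator {0..c} y * exp (y - 1)) * indicator {0..1} y
        = ennreal (1 - exp (c - 1)) * indicator {0..1} y + ennreal (exp (y - 1)) * indicator {0..c} y"
    proof (cases "y \<in> {0..c}")
      case True
      then have "y \<in> {0..1}" using c1 by auto
      then show ?thesis using True a0 by (simp add: ennreal_plus)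
    next
      case False
      then show ?thesis by simp
    qed
  qed
  also have "\<dots> = (\<integral>\<^sup>+y. ennreal (1 - exp (c - 1)) * indicator {0..1::real} y \<partial>lborel)
      + (\<integral>\<^sup>+y. ennreal (exp (y - 1)) * indicator {0..c} y \<partial>lborel)"
  proof -
    have m1: "(\<lambda>y. ennreal (1 - exp (c - 1)) * indicator {0..1::real} y) \<in> borel_measurable lborel"
      unfolding measurable_lborel1 by measurable
    have m2: "(\<lambda>y. ennreal (exp (y - 1)) * indicator {0..c} y) \<in> borel_measurable lborel"
      unfolding measurable_lborel1 by measurable
    show ?thesis by (rule nn_integral_add[OF m1 m2])
  qed
  also have "(\<integral>\<^sup>+y. ennreal (1 - exp (c - 1)) * indicator {0..1::real} y \<partial>lborel) = ennreal (1 - exp (c - 1))"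
    by (subst nn_integral_cmult_indicator) auto
  also have "(\<integral>\<^sup>+y. ennreal (exp (y - 1)) * indicator {0..c} y \<partial>lborel) = ennreal (exp (c - 1) - exp (0 - 1))"
  proof (rule nn_integral_FTC_Icc)
    show "\<And>x. x \<in> {0..c} \<Longrightarrow> ((\<lambda>y. exp (y - 1)) has_real_derivative exp (x - 1)) (at x)"
      by (auto intro!: derivative_eq_intros)
  qed (use c0 in auto)
  also have "ennreal (1 - exp (c - 1)) + ennreal (exp (c - 1) - exp (0 - 1)) = ennreal (1 - exp (-1))"
    using a0 c0 by (subst ennreal_plus[symmetric]) auto
  finally show ?thesis by (simp add: divide_ennreal_def)
qed

context rk
begin

lemma inner_integral:
  assumes ij: "(i, j) \<in> Ms" and inj: "inj_on x' (S - {j})"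
  shows "ennreal (1 - exp (-1)) \<le> (\<integral>\<^sup>+y. ennreal (alpha i (x'(j := y)) + beta j (x'(j := y))) \<partial>U)"
proof -
  define c where "c = yc i j x'"
  have c0: "0 \<le> c" and c1: "c \<le> 1" unfolding c_def using yc_ge0 yc_le1 by auto
  define g where "g y = (1 - exp (c - 1)) + indicator {0..c} y * exp (y - 1)" for y :: real
  have fin: "finite (insert c (x' ` (S - {j})))" using finS by simp
  have "AE y in lborel. y \<notin> insert c (x' ` (S - {j}))"
    by (rule AE_not_in) (rule countable_imp_null_set_lborel, rule countable_finite[OF fin])
  then have "AE y in lborel. y \<in> {0..1} \<longrightarrow> g y \<le> alpha i (x'(j := y)) + beta j (x'(j := y))"
  proof eventually_elim
    case (elim y)
    show ?case
    proof
      assume y01: "y \<in> {0..1}"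
      have "(1 - exp (yc i j x' - 1)) + (if y \<le> yc i j x' then exp (y - 1) else 0)
           \<le> alpha i (x'(j := y)) + beta j (x'(j := y))"
        by (rule inner_bound[OF ij inj y01]) (use elim c_def in auto)
      moreover have "g y = (1 - exp (yc i j x' - 1)) + (if y \<le> yc i j x' then exp (y - 1) else 0)"
        using y01 unfolding g_def c_def by (simp add: indicator_def)
      ultimately show "g y \<le> alpha i (x'(j := y)) + beta j (x'(j := y))" by simp
    qed
  qed
  then have AE: "AE y in U. g y \<le> alpha i (x'(j := y)) + beta j (x'(j := y))"
    by (subst AE_uniform_measure) auto
  have "ennreal (1 - exp (-1)) = (\<integral>\<^sup>+y. ennreal (g y) \<partial>U)"
    unfolding g_def by (rule U_integral_calc[OF c0 c1, symmetric])
  also have "\<dots> \<le> (\<integral>\<^sup>+y. ennreal (alpha i (x'(j := y)) + beta j (x'(j := y))) \<partial>U)"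
  proof -
    have AE': "AE y in U. ennreal (g y) \<le> ennreal (alpha i (x'(j := y)) + beta j (x'(j := y)))"
      using AE by eventually_elim (rule ennreal_leI)
    show ?thesis by (rule nn_integral_mono_AE[OF AE'])
  qed
  finally show ?thesis .
qed

lemma expect_pair:
  assumes ij: "(i, j) \<in> Ms"
  shows "ennreal (1 - exp (-1)) \<le> (\<integral>\<^sup>+x. ennreal (alpha i x + beta j x) \<partial>PiM S (\<lambda>_. U))"
proof -
  interpret PS: product_prob_space "\<lambda>_. U" S
    by (simp add: product_prob_space_def product_prob_space_axioms_def product_sigma_finite_def
        prob_U prob_space_imp_sigma_finite)
  define I where "I = S - {j}"
  have jS: "j \<in> S" using ij Ss_sub unfolding Ss_def by force
  have eqS: "PiM S (\<lambda>_. U) = PiM (insert j I) (\<lambda>_. U)" unfolding I_def using jS by (simp add: insert_absorb)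
  interpret PI: prob_space "PiM I (\<lambda>_. U)" by (rule prob_space_PiM) (rule prob_U)
  have finI: "finite I" unfolding I_def using finS by simp
  note comp_meas[measurable]
  have meas: "(\<lambda>x. ennreal (alpha i x + beta j x)) \<in> borel_measurable (PiM (insert j I) (\<lambda>_. U))"
    unfolding eqS[symmetric] by measurable
  have "(\<integral>\<^sup>+x. ennreal (alpha i x + beta j x) \<partial>PiM S (\<lambda>_. U))
      = (\<integral>\<^sup>+x'. (\<integral>\<^sup>+y. ennreal (alpha i (x'(j := y)) + beta j (x'(j := y))) \<partial>U) \<partial>PiM I (\<lambda>_. U))"
    unfolding eqS by (rule PS.product_nn_integral_insert[OF finI _ meas]) (simp add: I_def)
  moreover have "ennreal (1 - exp (-1)) \<le> (\<integral>\<^sup>+x'. (\<integral>\<^sup>+y. ennreal (alpha i (x'(j := y)) + beta j (x'(j := y))) \<partial>U) \<partial>PiM I (\<lambda>_. U))"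
  proof (rule PI.nn_integral_ge_const)
    show "AE x' in PiM I (\<lambda>_. U). ennreal (1 - exp (-1)) \<le> (\<integral>\<^sup>+y. ennreal (alpha i (x'(j := y)) + beta j (x'(j := y))) \<partial>U)"
      using AE_inj[OF finI] by eventually_elim (rule inner_integral[OF ij], simp add: I_def)
  qed
  ultimately show ?thesis by simp
qed

lemma expectation_bound:
  "ennreal ((1 - exp (-1)) * real (card Ms)) \<le> (\<integral>\<^sup>+x. ennreal (real (card (Mx x))) \<partial>PiM S (\<lambda>_. U))"
proof -
  have "(\<integral>\<^sup>+x. ennreal (real (card (Mx x))) \<partial>PiM S (\<lambda>_. U))
      = (\<integral>\<^sup>+x. (\<Sum>p\<in>Ms. ennreal (alpha (fst p) x + beta (snd p) x)) \<partial>PiM S (\<lambda>_. U))"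
  proof (rule nn_integral_cong)
    fix x
    have "(\<Sum>p\<in>Ms. ennreal (alpha (fst p) x + beta (snd p) x)) = ennreal (\<Sum>p\<in>Ms. alpha (fst p) x + beta (snd p) x)"
      by (rule sum_ennreal) (simp add: alpha_nn beta_nn add_nonneg_nonneg)
    then show "ennreal (real (card (Mx x))) = (\<Sum>p\<in>Ms. ennreal (alpha (fst p) x + beta (snd p) x))"
      by (simp add: sum_alpha_beta)
  qed
  also have "\<dots> = (\<Sum>p\<in>Ms. \<integral>\<^sup>+x. ennreal (alpha (fst p) x + beta (snd p) x) \<partial>PiM S (\<lambda>_. U))"
    by (rule nn_integral_sum) measurable
  finally have eq: "(\<integral>\<^sup>+x. ennreal (real (card (Mx x))) \<partial>PiM S (\<lambda>_. U))
      = (\<Sum>p\<in>Ms. \<integral>\<^sup>+x. ennreal (alpha (fst p) x + beta (snd p) x) \<partial>PiM S (\<lambda>_. U))" .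
  have "(\<Sum>p\<in>Ms. ennreal (1 - exp (-1))) \<le> (\<Sum>p\<in>Ms. \<integral>\<^sup>+x. ennreal (alpha (fst p) x + beta (snd p) x) \<partial>PiM S (\<lambda>_. U))"
    by (rule sum_mono) (rule expect_pair, simp)
  moreover have "(\<Sum>p\<in>Ms. ennreal (1 - exp (-1))) = ennreal ((1 - exp (-1)) * real (card Ms))"
    by (subst sum_ennreal) (auto simp: mult.commute)
  ultimately show ?thesis unfolding eq by simp
qed

end

theorem theorem1:
  fixes S :: "'s set" and B :: "'b set" and E :: "('b \<times> 's) set"
    and bs :: "'b list" and n :: nat and \<alpha> :: real
  assumes "finite S" and "finite B" and "E \<subseteq> B \<times> S"
    and "\<exists>M\<subseteq>E. is_matching M \<and> card M = n"
    and "\<alpha> > 0"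
    and "distinct bs" and "set bs = B"
  shows "{x \<in> space (rank_space S).
            real (card (ranking E x bs)) < (1 - 1 / exp 1 - \<alpha>) * real n}
           \<in> sets (rank_space S)
     \<and> measure (rank_space S)
         {x \<in> space (rank_space S).
            real (card (ranking E x bs)) < (1 - 1 / exp 1 - \<alpha>) * real n}
       < exp (- 2 * \<alpha>\<^sup>2 * real n)"
proof -
  note finS = assms(1)
  have finE: "finite E" by (rule finite_subset[OF assms(3) finite_cartesian_product[OF assms(2) finS]])
  have Esub: "snd ` E \<subseteq> S" using assms(3) by auto
  obtain Ms where Ms: "Ms \<subseteq> E" "is_matching Ms" "card Ms = n" using assms(4) by blast
  have cover: "fst ` Ms \<subseteq> set bs" using Ms(1) assms(3,7) by auto
  interpret R: rk S E Ms bs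
    by unfold_locales (use finS finE Esub Ms cover in auto)
  let ?P = "rank_space S"
  have P: "?P = PiM S (\<lambda>_. U)" unfolding rank_space_def ..
  interpret PS: product_prob_space "\<lambda>_. U" S
    by (simp add: product_prob_space_def product_prob_space_axioms_def product_sigma_finite_def
        prob_U prob_space_imp_sigma_finite)

  define c where "c = (1 - 1 / exp 1 - \<alpha>) * real n"
  define f where "f x = real (card (ranking E x bs))" for x
  have fm[measurable]: "f \<in> borel_measurable (PiM S (\<lambda>_. U))"
  proof (rule pattern_meas[OF finS])
    fix x y assume "same_pat S x y"
    then show "f x = f y" unfolding f_def using same_pat_ranking[OF Esub] by metis
  qed simp
  have sets1: "{x \<in> space ?P. f x < c} \<in> sets ?P" unfolding P by measurable
  obtain idx :: "'s \<Rightarrow> nat" and m where idx: "idx ` S = {i. i < m}" "inj_on idx S"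
    using finite_imp_inj_to_nat_seg[OF finS] by blast
  define gt where "gt x = real (card (ranking R.Es (tb S idx x) bs))" for x
  have gtm[measurable]: "gt \<in> borel_measurable (PiM S (\<lambda>_. U))"
  proof (rule pattern_meas[OF finS])
    fix x y assume "same_pat S x y"
    then have "tb S idx x = tb S idx y" by (rule tb_pattern)
    then show "gt x = gt y" unfolding gt_def by simp
  qed simp
  have gtK: "\<bar>gt x\<bar> \<le> real (card R.Es)" for x
  proof -
    have "ranking R.Es (tb S idx x) bs \<subseteq> R.Es"
      using good_run[OF R.finEs, of "tb S idx x" bs] unfolding ranking_def good_st_def by auto
    then have "card (ranking R.Es (tb S idx x) bs) \<le> card R.Es" by (rule card_mono[OF R.finEs])
    then show ?thesis unfolding gt_def by simp
  qed
  define cc where "cc j = (if j \<in> R.Ss then 1 else 0 :: real)" for j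
  have gtc: "\<bar>gt x - gt (x(j := z))\<bar> \<le> cc j" if j: "j \<in> S" for x j z
  proof -
    define r where "r = tb S idx x"
    define r' where "r' = tb S idx (x(j := z))"
    have ir: "inj_on r S" unfolding r_def by (rule tb_inj[OF finS idx(2)])
    have ir': "inj_on r' S" unfolding r'_def by (rule tb_inj[OF finS idx(2)])
    have oe: "\<forall>s\<in>S - {j}. \<forall>t\<in>S - {j}. (r s < r t \<longleftrightarrow> r' s < r' t)"
      unfolding r_def r'_def using tb_upd[OF finS idx(2)] by blast
    show ?thesis
    proof (cases "j \<in> R.Ss")
      case True
      have "\<bar>real (card (ranking R.Es r bs)) - real (card (ranking R.Es r' bs))\<bar> \<le> 1"
        by (rule bdl[OF R.finEs R.snd_Es ir ir' oe])
      then show ?thesis using True unfolding gt_def cc_def r_def r'_def by simp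
    next
      case False
      have "snd ` R.Es \<subseteq> S - {j}" using R.Es_mem R.Ss_sub False by force
      then have "ranking R.Es r bs = ranking R.Es r' bs"
        using oe by (intro order_equiv_ranking) blast
      then show ?thesis using False unfolding gt_def cc_def r_def r'_def by simp
    qed
  qed
  have Ss_card: "card R.Ss = n"
  proof -
    have "inj_on snd Ms" using matching_unique_snd[OF Ms(2)] by (auto intro: inj_onI)
    then show ?thesis unfolding R.Ss_def using Ms(3) by (simp add: card_image)
  qed
  have sumc: "(\<Sum>j\<in>S. (cc j)\<^sup>2) = real n"
  proof -
    have "(\<Sum>j\<in>S. (cc j)\<^sup>2) = (\<Sum>j\<in>S. if j \<in> R.Ss then 1 else 0)"
      unfolding cc_def by (rule sum.cong) auto
    also have "\<dots> = real (card (S \<inter> R.Ss))" using finS by (simp add: sum.If_cases)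
    also have "S \<inter> R.Ss = R.Ss" using R.Ss_sub by auto
    finally show ?thesis using Ss_card by simp
  qed
  have AEinj: "AE x in PiM S (\<lambda>_. U). inj_on x S" by (rule AE_inj[OF finS])
  have gt_eq: "gt x = real (card (R.Mx x))" if inj: "inj_on x S" for x
  proof -
    have "ranking R.Es (tb S idx x) bs = ranking R.Es x bs"
    proof (rule order_equiv_ranking)
      show "\<forall>s\<in>snd ` R.Es. \<forall>t\<in>snd ` R.Es. (tb S idx x s < tb S idx x t) = (x s < x t)"
        using tb_order_x[OF finS idx(2) inj] R.snd_Es by blast
    qed
    then show ?thesis unfolding gt_def R.Mx_def by simp
  qed
  have gt_le: "gt x \<le> f x" if inj: "inj_on x S" for x
  proof -
    have fD: "finite (S - R.Ss)" using finS by simp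
    have injE: "inj_on x (snd ` E)" using inj Esub by (rule inj_on_subset)
    have "card (ranking (del_b (del_s E (S - R.Ss)) R.Bs) x bs) \<le> card (ranking E x bs)"
      by (rule del_card[OF finE injE fD])
    then show ?thesis using gt_eq[OF inj] unfolding f_def R.Mx_def R.Es_def by simp
  qed
  have gt_int: "integrable (PiM S (\<lambda>_. U)) gt"
    by (rule PS.P.integrable_const_bound[where B = "real (card R.Es)"]) (use gtK in auto)
  have gt_nn: "0 \<le> gt x" for x unfolding gt_def by simp
  have Egt: "(1 - exp (-1)) * real n \<le> (\<integral>x. gt x \<partial>PiM S (\<lambda>_. U))"
  proof -
    have "ennreal ((1 - exp (-1)) * real n) \<le> (\<integral>\<^sup>+x. ennreal (real (card (R.Mx x))) \<partial>PiM S (\<lambda>_. U))"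
      using R.expectation_bound Ms(3) by simp
    also have "\<dots> = (\<integral>\<^sup>+x. ennreal (gt x) \<partial>PiM S (\<lambda>_. U))"
    proof (rule nn_integral_cong_AE)
      show "AE x in PiM S (\<lambda>_. U). ennreal (real (card (R.Mx x))) = ennreal (gt x)"
        using AEinj by eventually_elim (simp add: gt_eq)
    qed
    also have "\<dots> = ennreal (\<integral>x. gt x \<partial>PiM S (\<lambda>_. U))"
      by (rule nn_integral_eq_integral[OF gt_int]) (simp add: gt_nn)
    finally show ?thesis by (subst (asm) ennreal_le_iff) (auto intro: integral_nonneg_AE simp: gt_nn)
  qed
  show ?thesis
  proof (cases "n = 0")
    case True
    have "{x \<in> space ?P. f x < c} = {}" unfolding c_def f_def using True by auto
    then show ?thesis using sets1 True unfolding c_def f_def by simp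
  next
    case False
    then have np: "real n > 0" by simp
    define k where "k = \<lceil>c\<rceil> - 1"
    have kc: "real_of_int k < c" unfolding k_def using less_ceiling_iff[of "\<lceil>c\<rceil> - 1" c] by simp
    have nat_le: "real m \<le> real_of_int k" if "real m < c" for m :: nat
    proof -
      have "int m < \<lceil>c\<rceil>" using that less_ceiling_iff[of "int m" c] by simp
      then show ?thesis unfolding k_def by linarith
    qed
    define EG where "EG = (\<integral>x. gt x \<partial>PiM S (\<lambda>_. U))"
    define t where "t = EG - real_of_int k"
    have e1: "exp (-1) = 1 / exp (1::real)" by (simp add: exp_minus inverse_eq_divide)
    have tgt: "t > \<alpha> * real n"
      using Egt kc unfolding t_def EG_def c_def e1 by (simp add: algebra_simps)
    have tpos: "t > 0" using tgt assms(5) np by (smt (verit) mult_pos_pos)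
    have sub: "AE x in PiM S (\<lambda>_. U). x \<in> {x \<in> space ?P. f x < c} \<longrightarrow> x \<in> {x \<in> space (PiM S (\<lambda>_. U)). gt x \<le> EG - t}"
      using AEinj
    proof eventually_elim
      case (elim x)
      show ?case
      proof
        assume x: "x \<in> {x \<in> space ?P. f x < c}"
        have "gt x < c" using gt_le[OF elim] x by auto
        then have "gt x \<le> real_of_int k" using nat_le unfolding gt_def by blast
        then show "x \<in> {x \<in> space (PiM S (\<lambda>_. U)). gt x \<le> EG - t}" using x unfolding t_def P by auto
      qed
    qed
    have sets2: "{x \<in> space (PiM S (\<lambda>_. U)). gt x \<le> EG - t} \<in> sets (PiM S (\<lambda>_. U))" by measurable
    have "measure ?P {x \<in> space ?P. f x < c} \<le> measure (PiM S (\<lambda>_. U)) {x \<in> space (PiM S (\<lambda>_. U)). gt x \<le> EG - t}"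
      unfolding P by (rule PS.P.finite_measure_mono_AE[OF sub[unfolded P] sets2])
    also have "\<dots> \<le> exp (- 2 * t\<^sup>2 / (\<Sum>j\<in>S. (cc j)\<^sup>2))"
      unfolding EG_def
    proof (rule PS.mcdiarmid_le[OF finS gtm _ _ tpos])
      show "\<bar>gt x\<bar> \<le> real (card R.Es)" for x by (rule gtK)
      show "\<bar>gt x - gt (x(i := y))\<bar> \<le> cc i" if "i \<in> S" for x i y by (rule gtc[OF that])
      show "0 < (\<Sum>j\<in>S. (cc j)\<^sup>2)" using sumc np by simp
    qed
    also have "\<dots> = exp (- 2 * t\<^sup>2 / real n)" unfolding sumc ..
    also have "\<dots> < exp (- 2 * \<alpha>\<^sup>2 * real n)"
    proof -
      have "(\<alpha> * real n)\<^sup>2 < t\<^sup>2"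
        using tgt assms(5) np by (intro power_strict_mono) auto
      then have h: "\<alpha>\<^sup>2 * (real n)\<^sup>2 < t\<^sup>2" by (simp add: power_mult_distrib)
      have "\<alpha>\<^sup>2 * real n < t\<^sup>2 / real n"
        using h np by (simp add: less_divide_eq power2_eq_square mult.assoc)
      then show ?thesis by simp
    qed
    finally show ?thesis using sets1 unfolding c_def f_def by simp
  qed
qed

end
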